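(* Let $n\ge1$ and let $(\phi_1^k,\phi_2^k)\in\vec{\mathcal C}^{\mathcal G}_{\rm per}$, $k=n-1,n,n+1$, with $\overline{\phi_i^{n-1}}=\overline{\phi_i^{n}}=\overline{\phi_i^{n+1}}$ ($i=1,2$), where $(\phi_1^{n+1},\phi_2^{n+1})$ solves the BDF2 scheme at step $n+1$ with constants satisfying $A_1\ge\frac{\mathcal M_1(3\chi_{13}+3\chi_{23}+2\chi_{12})^2}{4}$ and $A_2\ge\frac{\mathcal M_2(3\chi_{13}+3\chi_{23}+2\chi_{12})^2}{4}$. Define, for $m\ge0$, $E_h^{m+1,m}=G_h(\phi_1^{m+1},\phi_2^{m+1})+\frac{\Delta t}{4\mathcal M_1}\big\|\frac{\phi_1^{m+1}-\phi_1^m}{\Delta t}\big\|_{-1,h}^2+\frac{\Delta t}{4\mathcal M_2}\big\|\frac{\phi_2^{m+1}-\phi_2^m}{\Delta t}\big\|_{-1,h}^2+\frac{2\chi_{12}+3\chi_{13}+\chi_{23}}{2}\|\phi_1^{m+1}-\phi_1^m\|_2^2+\frac{2\chi_{12}+\chi_{13}+3\chi_{23}}{2}\|\phi_2^{m+1}-\phi_2^m\|_2^2.$ Then $E_h^{n+1,n}\le E_h^{n,n-1}$.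
   Context: Discrete setting. Fix $L>0$, $N\in\mathbb N$, $h=L/N$, $\Omega=(0,L)^2$. $\mathcal C_{\rm per}$ is the space of real grid functions $\nu=(\nu_{i,j})_{i,j\in\mathbb Z}$ with $\nu_{i+aN,j+bN}=\nu_{i,j}$ for all integers $i,j,a,b$ ($\nu_{i,j}$ is the value at the cell centre $((i-\tfrac12)h,(j-\tfrac12)h)$); periodic face-centred functions are indexed by $(i+\frac12,j)$ (east-west faces) or $(i,j+\frac12)$ (north-south faces). Define $(A_x\nu)_{i+\frac12,j}=\tfrac12(\nu_{i+1,j}+\nu_{i,j})$, $(D_x\nu)_{i+\frac12,j}=\tfrac1h(\nu_{i+1,j}-\nu_{i,j})$, and for east-west face functions $f$, $(a_xf)_{i,j}=\tfrac12(f_{i+\frac12,j}+f_{i-\frac12,j})$, $(d_xf)_{i,j}=\tfrac1h(f_{i+\frac12,j}-f_{i-\frac12,j})$; $A_y,D_y,a_y,d_y$ are defined analogously in the second index. $\nabla_h\nu=(D_x\nu,D_y\nu)$, $\nabla_h\cdot(f^x,f^y)=d_xf^x+d_yf^y$, $\Delta_h\nu=d_x(D_x\nu)+d_y(D_y\nu)$ (the 5-point Laplacian). For $\nu,\xi\in\mathcal C_{\rm per}$: $\langle\nu,\xi\rangle=h^2\sum_{i,j=1}^N\nu_{i,j}\xi_{i,j}$, $\|\nu\|_2=\langle\nu,\nu\rangle^{1/2}$, $\|\nu\|_\infty=\max_{1\le i,j\le N}|\nu_{i,j}|$, $\|\nabla_h\nu\|_2^2=\langle a_x((D_x\nu)^2)+a_y((D_y\nu)^2),1\rangle$,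 $\overline{\nu}=|\Omega|^{-1}\langle\nu,1\rangle$. For $\overline\nu=0$, $(-\Delta_h)^{-1}\nu$ denotes the unique mean-zero $\psi\in\mathcal C_{\rm per}$ with $-\Delta_h\psi=\nu$; for mean-zero $\nu,\xi$, $\langle\nu,\xi\rangle_{-1,h}=\langle\nu,(-\Delta_h)^{-1}\xi\rangle$ and $\|\nu\|_{-1,h}=\langle\nu,\nu\rangle_{-1,h}^{1/2}$. Functions of grid functions (products, quotients, $\ln$) act pointwise. Model. $M_0,N_0>0$, $\alpha=\pi((M_0/\pi)^{1/2}+N_0/2)^2$, $\beta=2(M_0/\pi)^{1/2}+N_0$; $\varepsilon_1,\varepsilon_2,\varepsilon_3>0$; $\chi_{12},\chi_{13},\chi_{23}>0$ with $4\chi_{13}\chi_{23}-(\chi_{12}-\chi_{13}-\chi_{23})^2>0$; mobilities $\mathcal M_1,\mathcal M_2>0$. For $a,b>0$, $a+b<1$: $S(a,b)=\frac{a}{M_0}\ln\frac{\alpha a}{M_0}+\frac{b}{N_0}\ln\frac{\beta b}{N_0}+(1-a-b)\ln(1-a-b)$, $H(a,b)=\chi_{12}ab+\chi_{13}a(1-a-b)+\chi_{23}b(1-a-b)$; thus $\partial_aS=\frac1{M_0}\ln\frac{\alpha a}{M_0}+\frac1{M_0}-\ln(1-a-b)-1$, $\partial_bS=\frac1{N_0}\ln\frac{\beta b}{N_0}+\frac1{N_0}-\ln(1-a-b)-1$, $\partial_aH=\chi_{13}-2\chi_{13}a+(\chi_{12}-\chi_{13}-\chi_{23})b$, $\partial_bH=\chi_{23}-2\chi_{23}b+(\chi_{12}-\chi_{13}-\chi_{23})a$.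 $\kappa(s)=1/(36s)$. The Gibbs triangle is $\mathcal G=\{(a,b):a>0,b>0,a+b<1\}$, and $\vec{\mathcal C}^{\mathcal G}_{\rm per}$ is the set of pairs $(\phi_1,\phi_2)\in\mathcal C_{\rm per}^2$ with $((\phi_1)_{i,j},(\phi_2)_{i,j})\in\mathcal G$ for all $i,j$. For such a pair set $u_1=\phi_1$, $u_2=\phi_2$, $u_3=1-\phi_1-\phi_2$ and, for $k=1,2,3$, $T_k(\phi_1,\phi_2)=a_x(\kappa'(A_xu_k)(D_xu_k)^2)-2d_x(\kappa(A_xu_k)D_xu_k)+a_y(\kappa'(A_yu_k)(D_yu_k)^2)-2d_y(\kappa(A_yu_k)D_yu_k)$. Discrete energy: $G_h(\phi_1,\phi_2)=\langle S(\phi_1,\phi_2)+H(\phi_1,\phi_2),1\rangle+\sum_{k=1}^3\varepsilon_k^2\langle a_x(\kappa(A_xu_k)(D_xu_k)^2)+a_y(\kappa(A_yu_k)(D_yu_k)^2),1\rangle$. Convex-part derivatives: $\delta_{\phi_1}G_{h,c}(\phi_1,\phi_2)=\partial_aS(\phi_1,\phi_2)+\varepsilon_1^2T_1-\varepsilon_3^2T_3$, $\delta_{\phi_2}G_{h,c}(\phi_1,\phi_2)=\partial_bS(\phi_1,\phi_2)+\varepsilon_2^2T_2-\varepsilon_3^2T_3$. BDF2 scheme. Fix $\Delta t>0$ and constants $A_1,A_2\ge0$. For $n\ge1$, given $(\phi_1^{k},\phi_2^{k})$, $k=n-1,n$, set $\hat\phi_i^n=2\phi_i^n-\phi_i^{n-1}$.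 A pair $(\phi_1^{n+1},\phi_2^{n+1})\in\vec{\mathcal C}^{\mathcal G}_{\rm per}$ solves the scheme at step $n+1$ if for $i=1,2$: $\frac{3\phi_i^{n+1}-4\phi_i^n+\phi_i^{n-1}}{2\Delta t}=\mathcal M_i\Delta_h\mu_i^{n+1}$, where $\mu_1^{n+1}=\delta_{\phi_1}G_{h,c}(\phi_1^{n+1},\phi_2^{n+1})+\partial_aH(\hat\phi_1^n,\hat\phi_2^n)-A_1\Delta t\,\Delta_h(\phi_1^{n+1}-\phi_1^n)$ and $\mu_2^{n+1}=\delta_{\phi_2}G_{h,c}(\phi_1^{n+1},\phi_2^{n+1})+\partial_bH(\hat\phi_1^n,\hat\phi_2^n)-A_2\Delta t\,\Delta_h(\phi_2^{n+1}-\phi_2^n)$. *)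

theory Defs
  imports Complex_Main
begin

text \<open>Cell-centred grid functions on Z^2. An east-west face function f is stored so that
  f i j is the value at the face (i+1/2, j); a north-south face function g is stored so that
  g i j is the value at (i, j+1/2).\<close>

type_synonym grid = "int \<Rightarrow> int \<Rightarrow> real"

definition periodic :: "nat \<Rightarrow> grid \<Rightarrow> bool" where
  "periodic N \<nu> \<longleftrightarrow> (\<forall>i j a b. \<nu> (i + a * int N) (j + b * int N) = \<nu> i j)"

definition Ax :: "grid \<Rightarrow> grid" where "Ax \<nu> = (\<lambda>i j. (\<nu> (i+1) j + \<nu> i j) / 2)"
definition Ay :: "grid \<Rightarrow> grid" where "Ay \<nu> = (\<lambda>i j. (\<nu> i (j+1) + \<nu> i j) / 2)"
definition Dx :: "real \<Rightarrow> grid \<Rightarrow> grid" where "Dx h \<nu> = (\<lambda>i j. (\<nu> (i+1) j - \<nu> i j) / h)"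
definition Dy :: "real \<Rightarrow> grid \<Rightarrow> grid" where "Dy h \<nu> = (\<lambda>i j. (\<nu> i (j+1) - \<nu> i j) / h)"
definition ax :: "grid \<Rightarrow> grid" where "ax f = (\<lambda>i j. (f i j + f (i-1) j) / 2)"
definition ay :: "grid \<Rightarrow> grid" where "ay f = (\<lambda>i j. (f i j + f i (j-1)) / 2)"
definition dx :: "real \<Rightarrow> grid \<Rightarrow> grid" where "dx h f = (\<lambda>i j. (f i j - f (i-1) j) / h)"
definition dy :: "real \<Rightarrow> grid \<Rightarrow> grid" where "dy h f = (\<lambda>i j. (f i j - f i (j-1)) / h)"

definition lap :: "real \<Rightarrow> grid \<Rightarrow> grid" where
  "lap h \<nu> = (\<lambda>i j. dx h (Dx h \<nu>) i j + dy h (Dy h \<nu>) i j)"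

definition gip :: "real \<Rightarrow> nat \<Rightarrow> grid \<Rightarrow> grid \<Rightarrow> real" where
  "gip L N \<nu> \<xi> = (L / real N)^2 * (\<Sum>i\<in>{1..int N}. \<Sum>j\<in>{1..int N}. \<nu> i j * \<xi> i j)"

definition gnorm2 :: "real \<Rightarrow> nat \<Rightarrow> grid \<Rightarrow> real" where
  "gnorm2 L N \<nu> = sqrt (gip L N \<nu> \<nu>)"

definition gmean :: "real \<Rightarrow> nat \<Rightarrow> grid \<Rightarrow> real" where
  "gmean L N \<nu> = gip L N \<nu> (\<lambda>_ _. 1) / L^2"

definition invlap :: "real \<Rightarrow> nat \<Rightarrow> grid \<Rightarrow> grid" where
  "invlap L N \<nu> = (THE \<psi>. periodic N \<psi> \<and> gmean L N \<psi> = 0 \<and>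
                       (\<forall>i j. - lap (L / real N) \<psi> i j = \<nu> i j))"

definition hm1_ip :: "real \<Rightarrow> nat \<Rightarrow> grid \<Rightarrow> grid \<Rightarrow> real" where
  "hm1_ip L N \<nu> \<xi> = gip L N \<nu> (invlap L N \<xi>)"

definition hm1_norm :: "real \<Rightarrow> nat \<Rightarrow> grid \<Rightarrow> real" where
  "hm1_norm L N \<nu> = sqrt (hm1_ip L N \<nu> \<nu>)"

definition alphaC :: "real \<Rightarrow> real \<Rightarrow> real" where
  "alphaC M0 N0 = pi * (sqrt (M0 / pi) + N0 / 2)^2"
definition betaC :: "real \<Rightarrow> real \<Rightarrow> real" where
  "betaC M0 N0 = 2 * sqrt (M0 / pi) + N0"

definition Sfun :: "real \<Rightarrow> real \<Rightarrow> real \<Rightarrow> real \<Rightarrow> real" where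
  "Sfun M0 N0 a b = a / M0 * ln (alphaC M0 N0 * a / M0) + b / N0 * ln (betaC M0 N0 * b / N0)
                    + (1 - a - b) * ln (1 - a - b)"

definition Hfun :: "real \<Rightarrow> real \<Rightarrow> real \<Rightarrow> real \<Rightarrow> real \<Rightarrow> real" where
  "Hfun c12 c13 c23 a b = c12 * a * b + c13 * a * (1 - a - b) + c23 * b * (1 - a - b)"

definition dSa :: "real \<Rightarrow> real \<Rightarrow> real \<Rightarrow> real \<Rightarrow> real" where
  "dSa M0 N0 a b = 1 / M0 * ln (alphaC M0 N0 * a / M0) + 1 / M0 - ln (1 - a - b) - 1"
definition dSb :: "real \<Rightarrow> real \<Rightarrow> real \<Rightarrow> real \<Rightarrow> real" where
  "dSb M0 N0 a b = 1 / N0 * ln (betaC M0 N0 * b / N0) + 1 / N0 - ln (1 - a - b) - 1"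
definition dHa :: "real \<Rightarrow> real \<Rightarrow> real \<Rightarrow> real \<Rightarrow> real \<Rightarrow> real" where
  "dHa c12 c13 c23 a b = c13 - 2 * c13 * a + (c12 - c13 - c23) * b"
definition dHb :: "real \<Rightarrow> real \<Rightarrow> real \<Rightarrow> real \<Rightarrow> real \<Rightarrow> real" where
  "dHb c12 c13 c23 a b = c23 - 2 * c23 * b + (c12 - c13 - c23) * a"

definition kappa :: "real \<Rightarrow> real" where "kappa s = 1 / (36 * s)"
definition kappa' :: "real \<Rightarrow> real" where "kappa' s = - 1 / (36 * s^2)"

definition gibbs :: "nat \<Rightarrow> grid \<Rightarrow> grid \<Rightarrow> bool" where
  "gibbs N \<phi>1 \<phi>2 \<longleftrightarrow> periodic N \<phi>1 \<and> periodic N \<phi>2 \<and>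
     (\<forall>i j. 0 < \<phi>1 i j \<and> 0 < \<phi>2 i j \<and> \<phi>1 i j + \<phi>2 i j < 1)"

definition u3 :: "grid \<Rightarrow> grid \<Rightarrow> grid" where "u3 \<phi>1 \<phi>2 = (\<lambda>i j. 1 - \<phi>1 i j - \<phi>2 i j)"

definition Tk :: "real \<Rightarrow> grid \<Rightarrow> grid" where
  "Tk h u = (\<lambda>i j.
      ax (\<lambda>i j. kappa' (Ax u i j) * (Dx h u i j)^2) i j
    - 2 * dx h (\<lambda>i j. kappa (Ax u i j) * Dx h u i j) i j
    + ay (\<lambda>i j. kappa' (Ay u i j) * (Dy h u i j)^2) i j
    - 2 * dy h (\<lambda>i j. kappa (Ay u i j) * Dy h u i j) i j)"

definition grad_term :: "real \<Rightarrow> nat \<Rightarrow> grid \<Rightarrow> real" where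
  "grad_term L N u = gip L N
     (\<lambda>i j. ax (\<lambda>i j. kappa (Ax u i j) * (Dx (L / real N) u i j)^2) i j
          + ay (\<lambda>i j. kappa (Ay u i j) * (Dy (L / real N) u i j)^2) i j) (\<lambda>_ _. 1)"

definition Gh :: "real \<Rightarrow> nat \<Rightarrow> real \<Rightarrow> real \<Rightarrow> real \<Rightarrow> real \<Rightarrow> real \<Rightarrow> real \<Rightarrow> real \<Rightarrow> real
                  \<Rightarrow> grid \<Rightarrow> grid \<Rightarrow> real" where
  "Gh L N M0 N0 e1 e2 e3 c12 c13 c23 \<phi>1 \<phi>2 =
     gip L N (\<lambda>i j. Sfun M0 N0 (\<phi>1 i j) (\<phi>2 i j) + Hfun c12 c13 c23 (\<phi>1 i j) (\<phi>2 i j)) (\<lambda>_ _. 1)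
     + e1^2 * grad_term L N \<phi>1 + e2^2 * grad_term L N \<phi>2 + e3^2 * grad_term L N (u3 \<phi>1 \<phi>2)"

definition dGc1 :: "real \<Rightarrow> nat \<Rightarrow> real \<Rightarrow> real \<Rightarrow> real \<Rightarrow> real \<Rightarrow> grid \<Rightarrow> grid \<Rightarrow> grid" where
  "dGc1 L N M0 N0 e1 e3 \<phi>1 \<phi>2 = (\<lambda>i j. dSa M0 N0 (\<phi>1 i j) (\<phi>2 i j)
      + e1^2 * Tk (L / real N) \<phi>1 i j - e3^2 * Tk (L / real N) (u3 \<phi>1 \<phi>2) i j)"

definition dGc2 :: "real \<Rightarrow> nat \<Rightarrow> real \<Rightarrow> real \<Rightarrow> real \<Rightarrow> real \<Rightarrow> grid \<Rightarrow> grid \<Rightarrow> grid" where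
  "dGc2 L N M0 N0 e2 e3 \<phi>1 \<phi>2 = (\<lambda>i j. dSb M0 N0 (\<phi>1 i j) (\<phi>2 i j)
      + e2^2 * Tk (L / real N) \<phi>2 i j - e3^2 * Tk (L / real N) (u3 \<phi>1 \<phi>2) i j)"

text \<open>The BDF2 scheme at step n+1, for given old data (p1o,p2o) = step n-1,
  (p1,p2) = step n and new data (p1n,p2n) = step n+1.\<close>
definition bdf2_step ::
  "real \<Rightarrow> nat \<Rightarrow> real \<Rightarrow> real \<Rightarrow> real \<Rightarrow> real \<Rightarrow> real \<Rightarrow> real \<Rightarrow> real \<Rightarrow> real \<Rightarrow> real \<Rightarrow> real
   \<Rightarrow> real \<Rightarrow> real \<Rightarrow> real
   \<Rightarrow> grid \<Rightarrow> grid \<Rightarrow> grid \<Rightarrow> grid \<Rightarrow> grid \<Rightarrow> grid \<Rightarrow> bool" where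
  "bdf2_step L N M0 N0 e1 e2 e3 c12 c13 c23 Mob1 Mob2 dt A1 A2 p1o p1 p1n p2o p2 p2n \<longleftrightarrow>
     gibbs N p1n p2n \<and>
     (let h = L / real N;
          hat1 = (\<lambda>i j. 2 * p1 i j - p1o i j);
          hat2 = (\<lambda>i j. 2 * p2 i j - p2o i j);
          mu1 = (\<lambda>i j. dGc1 L N M0 N0 e1 e3 p1n p2n i j + dHa c12 c13 c23 (hat1 i j) (hat2 i j)
                       - A1 * dt * lap h (\<lambda>i j. p1n i j - p1 i j) i j);
          mu2 = (\<lambda>i j. dGc2 L N M0 N0 e2 e3 p1n p2n i j + dHb c12 c13 c23 (hat1 i j) (hat2 i j)
                       - A2 * dt * lap h (\<lambda>i j. p2n i j - p2 i j) i j)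
      in (\<forall>i j. (3 * p1n i j - 4 * p1 i j + p1o i j) / (2 * dt) = Mob1 * lap h mu1 i j) \<and>
         (\<forall>i j. (3 * p2n i j - 4 * p2 i j + p2o i j) / (2 * dt) = Mob2 * lap h mu2 i j))"

text \<open>The modified energy E_h^{m+1,m}, with (p1n,p2n) = step m+1 and (p1,p2) = step m.\<close>
definition Eh ::
  "real \<Rightarrow> nat \<Rightarrow> real \<Rightarrow> real \<Rightarrow> real \<Rightarrow> real \<Rightarrow> real \<Rightarrow> real \<Rightarrow> real \<Rightarrow> real \<Rightarrow> real \<Rightarrow> real
   \<Rightarrow> real \<Rightarrow> grid \<Rightarrow> grid \<Rightarrow> grid \<Rightarrow> grid \<Rightarrow> real" where
  "Eh L N M0 N0 e1 e2 e3 c12 c13 c23 Mob1 Mob2 dt p1 p1n p2 p2n =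
     Gh L N M0 N0 e1 e2 e3 c12 c13 c23 p1n p2n
     + dt / (4 * Mob1) * (hm1_norm L N (\<lambda>i j. (p1n i j - p1 i j) / dt))^2
     + dt / (4 * Mob2) * (hm1_norm L N (\<lambda>i j. (p2n i j - p2 i j) / dt))^2
     + (2 * c12 + 3 * c13 + c23) / 2 * (gnorm2 L N (\<lambda>i j. p1n i j - p1 i j))^2
     + (2 * c12 + c13 + 3 * c23) / 2 * (gnorm2 L N (\<lambda>i j. p2n i j - p2 i j))^2"

end

theory Submission
  imports Defs "Jordan_Normal_Form.Determinant"
begin


lemma sum_shift_m1:
  fixes f :: "int \<Rightarrow> real"
  assumes "f 0 = f (int N)"
  shows "(\<Sum>i\<in>{1..int N}. f (i - 1)) = (\<Sum>i\<in>{1..int N}. f i)"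
proof -
  have "(\<Sum>i\<in>{1..int N}. f (i - 1)) = (\<Sum>i\<in>{0..int N - 1}. f i)"
    by (rule sum.reindex_bij_witness[of _ "\<lambda>i. i + 1" "\<lambda>i. i - 1"]) auto
  also have "\<dots> = (\<Sum>i\<in>{1..int N}. f i)"
  proof (cases "N = 0")
    case True then show ?thesis by (simp add: True)
  next
    case False
    have a: "{0..int N - 1} = insert 0 {1..int N - 1}" using False by auto
    have b: "{1..int N} = insert (int N) {1..int N - 1}" using False by auto
    show ?thesis unfolding a b using assms by simp
  qed
  finally show ?thesis .
qed

lemma periodicD: "periodic N f \<Longrightarrow> f (i + a * int N) (j + b * int N) = f i j"
  unfolding periodic_def by blast

lemma per_x: "periodic N f \<Longrightarrow> f (i + int N) j = f i j"
  using periodicD[of N f i 1 j 0] by simp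
lemma per_y: "periodic N f \<Longrightarrow> f i (j + int N) = f i j"
  using periodicD[of N f i 0 j 1] by simp

lemma periodicI:
  assumes x: "\<And>i j. f (i + int N) j = f i j" and y: "\<And>i j. f i (j + int N) = f i j"
  shows "periodic N f"
proof -
  have X: "f (i + a * int N) j = f i j" for i j a
  proof (induction a arbitrary: i rule: int_induct[where k=0])
    case base then show ?case by simp
  next
    case (step1 a) then show ?case using x[of "i + a * int N" j] by (simp add: algebra_simps)
  next
    case (step2 a) then show ?case using x[of "i + (a - 1) * int N" j] by (simp add: algebra_simps)
  qed
  have Y: "f i (j + b * int N) = f i j" for i j b
  proof (induction b arbitrary: j rule: int_induct[where k=0])
    case base then show ?case by simp
  next
    case (step1 b) then show ?case using y[of i "j + b * int N"] by (simp add: algebra_simps)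
  next
    case (step2 b) then show ?case using y[of i "j + (b - 1) * int N"] by (simp add: algebra_simps)
  qed
  show ?thesis unfolding periodic_def using X Y by simp
qed

lemma per_x2: "periodic N f \<Longrightarrow> f (i + int N + c) j = f (i + c) j"
  using per_x[of N f "i + c" j] by (simp add: add_ac)
lemma per_x3: "periodic N f \<Longrightarrow> f (i + int N - c) j = f (i - c) j"
  using per_x[of N f "i - c" j] by (simp add: algebra_simps)
lemma per_y2: "periodic N f \<Longrightarrow> f i (j + int N + c) = f i (j + c)"
  using per_y[of N f i "j + c"] by (simp add: add_ac)
lemma per_y3: "periodic N f \<Longrightarrow> f i (j + int N - c) = f i (j - c)"
  using per_y[of N f i "j - c"] by (simp add: algebra_simps)

lemmas per_simps = per_x per_y per_x2 per_x3 per_y2 per_y3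

lemma per_Ax: "periodic N u \<Longrightarrow> periodic N (Ax u)"
  by (rule periodicI) (simp_all add: Ax_def per_simps)
lemma per_Ay: "periodic N u \<Longrightarrow> periodic N (Ay u)"
  by (rule periodicI) (simp_all add: Ay_def per_simps)
lemma per_Dx: "periodic N u \<Longrightarrow> periodic N (Dx h u)"
  by (rule periodicI) (simp_all add: Dx_def per_simps)
lemma per_Dy: "periodic N u \<Longrightarrow> periodic N (Dy h u)"
  by (rule periodicI) (simp_all add: Dy_def per_simps)
lemma per_ax: "periodic N u \<Longrightarrow> periodic N (ax u)"
  by (rule periodicI) (simp_all add: ax_def per_simps)
lemma per_ay: "periodic N u \<Longrightarrow> periodic N (ay u)"
  by (rule periodicI) (simp_all add: ay_def per_simps)
lemma per_dx: "periodic N u \<Longrightarrow> periodic N (dx h u)"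
  by (rule periodicI) (simp_all add: dx_def per_simps)
lemma per_dy: "periodic N u \<Longrightarrow> periodic N (dy h u)"
  by (rule periodicI) (simp_all add: dy_def per_simps)
lemma per_lap: "periodic N u \<Longrightarrow> periodic N (lap h u)"
  unfolding lap_def
  by (rule periodicI) (simp_all add: per_x per_y per_dx per_dy per_Dx per_Dy)


definition S2 :: "nat \<Rightarrow> grid \<Rightarrow> real" where
  "S2 N f = (\<Sum>i\<in>{1..int N}. \<Sum>j\<in>{1..int N}. f i j)"

lemma S2_add: "S2 N (\<lambda>i j. f i j + g i j) = S2 N f + S2 N g"
  unfolding S2_def by (simp add: sum.distrib)
lemma S2_diff: "S2 N (\<lambda>i j. f i j - g i j) = S2 N f - S2 N g"
  unfolding S2_def by (simp add: sum_subtractf)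
lemma S2_cmult: "S2 N (\<lambda>i j. c * f i j) = c * S2 N f"
  unfolding S2_def by (simp add: sum_distrib_left)
lemma S2_multc: "S2 N (\<lambda>i j. f i j * c) = S2 N f * c"
  unfolding S2_def by (simp add: sum_distrib_right)
lemma S2_divc: "S2 N (\<lambda>i j. f i j / c) = S2 N f / c"
  unfolding S2_def by (simp add: sum_divide_distrib)
lemma S2_neg: "S2 N (\<lambda>i j. - f i j) = - S2 N f"
  unfolding S2_def by (simp add: sum_negf)
lemma S2_const: "S2 N (\<lambda>i j. c) = real N ^ 2 * c"
  unfolding S2_def by (simp add: power2_eq_square)
lemma S2_mono: "(\<And>i j. 1 \<le> i \<Longrightarrow> i \<le> int N \<Longrightarrow> 1 \<le> j \<Longrightarrow> j \<le> int N \<Longrightarrow> f i j \<le> g i j) \<Longrightarrow> S2 N f \<le> S2 N g"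
  unfolding S2_def by (intro sum_mono) auto
lemma S2_nonneg: "(\<And>i j. 0 \<le> f i j) \<Longrightarrow> 0 \<le> S2 N f"
  unfolding S2_def by (intro sum_nonneg) auto
lemma S2_cong: "(\<And>i j. f i j = g i j) \<Longrightarrow> S2 N f = S2 N g"
proof -
  assume "\<And>i j. f i j = g i j" then have "f = g" by (intro ext)
  then show ?thesis by simp
qed

lemma S2_shift_x:
  assumes "periodic N G"
  shows "S2 N (\<lambda>i j. G (i - 1) j) = S2 N G"
  unfolding S2_def
  by (rule sum_shift_m1[of "\<lambda>i. \<Sum>j\<in>{1..int N}. G i j"]) (simp add: per_x[OF assms, of 0, simplified])

lemma S2_shift_y:
  assumes "periodic N G"
  shows "S2 N (\<lambda>i j. G i (j - 1)) = S2 N G"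
  unfolding S2_def
  by (rule sum.cong[OF refl], rule sum_shift_m1) (simp add: per_y[OF assms, of _ 0, simplified])

lemma per_prod: "periodic N f \<Longrightarrow> periodic N g \<Longrightarrow> periodic N (\<lambda>i j. f i j * g i j)"
  by (rule periodicI) (simp_all add: per_simps)

lemma S2_shift_x':
  assumes "periodic N F" "periodic N w"
  shows "S2 N (\<lambda>i j. F (i - 1) j * w i j) = S2 N (\<lambda>i j. F i j * w (i + 1) j)"
proof -
  have p: "periodic N (\<lambda>i j. F i j * w (i + 1) j)"
    by (rule periodicI) (simp_all add: per_simps assms)
  show ?thesis using S2_shift_x[OF p] by simp
qed

lemma S2_shift_y':
  assumes "periodic N F" "periodic N w"
  shows "S2 N (\<lambda>i j. F i (j - 1) * w i j) = S2 N (\<lambda>i j. F i j * w i (j + 1))"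
proof -
  have p: "periodic N (\<lambda>i j. F i j * w i (j + 1))"
    by (rule periodicI) (simp_all add: per_simps assms)
  show ?thesis using S2_shift_y[OF p] by simp
qed

lemma sbp_ax:
  assumes "periodic N F" "periodic N w"
  shows "S2 N (\<lambda>i j. ax F i j * w i j) = S2 N (\<lambda>i j. F i j * Ax w i j)"
proof -
  have "S2 N (\<lambda>i j. ax F i j * w i j) = (S2 N (\<lambda>i j. F i j * w i j) + S2 N (\<lambda>i j. F (i - 1) j * w i j)) / 2"
    unfolding ax_def by (simp add: S2_add[symmetric] S2_divc[symmetric] algebra_simps add_divide_distrib)
  also have "\<dots> = (S2 N (\<lambda>i j. F i j * w i j) + S2 N (\<lambda>i j. F i j * w (i + 1) j)) / 2"
    using S2_shift_x'[OF assms] by simp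
  also have "\<dots> = S2 N (\<lambda>i j. F i j * Ax w i j)"
    unfolding Ax_def by (simp add: S2_add[symmetric] S2_divc[symmetric] algebra_simps add_divide_distrib)
  finally show ?thesis .
qed

lemma sbp_ay:
  assumes "periodic N F" "periodic N w"
  shows "S2 N (\<lambda>i j. ay F i j * w i j) = S2 N (\<lambda>i j. F i j * Ay w i j)"
proof -
  have "S2 N (\<lambda>i j. ay F i j * w i j) = (S2 N (\<lambda>i j. F i j * w i j) + S2 N (\<lambda>i j. F i (j - 1) * w i j)) / 2"
    unfolding ay_def by (simp add: S2_add[symmetric] S2_divc[symmetric] algebra_simps add_divide_distrib)
  also have "\<dots> = (S2 N (\<lambda>i j. F i j * w i j) + S2 N (\<lambda>i j. F i j * w i (j + 1))) / 2"
    using S2_shift_y'[OF assms] by simp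
  also have "\<dots> = S2 N (\<lambda>i j. F i j * Ay w i j)"
    unfolding Ay_def by (simp add: S2_add[symmetric] S2_divc[symmetric] algebra_simps add_divide_distrib)
  finally show ?thesis .
qed

lemma sbp_dx:
  assumes "periodic N F" "periodic N w"
  shows "S2 N (\<lambda>i j. dx h F i j * w i j) = - S2 N (\<lambda>i j. F i j * Dx h w i j)"
proof -
  have "S2 N (\<lambda>i j. dx h F i j * w i j) = (S2 N (\<lambda>i j. F i j * w i j) - S2 N (\<lambda>i j. F (i - 1) j * w i j)) / h"
    unfolding dx_def by (simp add: S2_diff[symmetric] S2_divc[symmetric] algebra_simps diff_divide_distrib)
  also have "\<dots> = (S2 N (\<lambda>i j. F i j * w i j) - S2 N (\<lambda>i j. F i j * w (i + 1) j)) / h"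
    using S2_shift_x'[OF assms] by simp
  also have "\<dots> = - S2 N (\<lambda>i j. F i j * Dx h w i j)"
    unfolding Dx_def by (simp add: S2_neg[symmetric] S2_diff[symmetric] S2_divc[symmetric] algebra_simps diff_divide_distrib)
  finally show ?thesis .
qed

lemma sbp_dy:
  assumes "periodic N F" "periodic N w"
  shows "S2 N (\<lambda>i j. dy h F i j * w i j) = - S2 N (\<lambda>i j. F i j * Dy h w i j)"
proof -
  have "S2 N (\<lambda>i j. dy h F i j * w i j) = (S2 N (\<lambda>i j. F i j * w i j) - S2 N (\<lambda>i j. F i (j - 1) * w i j)) / h"
    unfolding dy_def by (simp add: S2_diff[symmetric] S2_divc[symmetric] algebra_simps diff_divide_distrib)
  also have "\<dots> = (S2 N (\<lambda>i j. F i j * w i j) - S2 N (\<lambda>i j. F i j * w i (j + 1))) / h"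
    using S2_shift_y'[OF assms] by simp
  also have "\<dots> = - S2 N (\<lambda>i j. F i j * Dy h w i j)"
    unfolding Dy_def by (simp add: S2_neg[symmetric] S2_diff[symmetric] S2_divc[symmetric] algebra_simps diff_divide_distrib)
  finally show ?thesis .
qed

definition Bf :: "nat \<Rightarrow> real \<Rightarrow> grid \<Rightarrow> grid \<Rightarrow> real" where
  "Bf N h f g = S2 N (\<lambda>i j. Dx h f i j * Dx h g i j + Dy h f i j * Dy h g i j)"

lemma sbp_lap:
  assumes "periodic N f" "periodic N g"
  shows "S2 N (\<lambda>i j. lap h f i j * g i j) = - Bf N h f g"
proof -
  have "S2 N (\<lambda>i j. lap h f i j * g i j) = S2 N (\<lambda>i j. dx h (Dx h f) i j * g i j) + S2 N (\<lambda>i j. dy h (Dy h f) i j * g i j)"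
    unfolding lap_def by (simp add: S2_add[symmetric] algebra_simps)
  also have "\<dots> = - Bf N h f g"
    unfolding Bf_def sbp_dx[OF per_Dx[OF assms(1)] assms(2)] sbp_dy[OF per_Dy[OF assms(1)] assms(2)]
    by (simp add: S2_add)
  finally show ?thesis .
qed


lemma per_red:
  assumes "periodic N f" "N \<ge> 1"
  shows "f i j = f ((i - 1) mod int N + 1) ((j - 1) mod int N + 1)"
proof -
  have "f ((i - 1) mod int N + 1 + ((i - 1) div int N) * int N) ((j - 1) mod int N + 1 + ((j - 1) div int N) * int N)
        = f ((i - 1) mod int N + 1) ((j - 1) mod int N + 1)"
    by (rule periodicD[OF assms(1)])
  moreover have "(i - 1) mod int N + 1 + ((i - 1) div int N) * int N = i"
    by (metis add.commute add.left_commute diff_add_cancel mult.commute div_mult_mod_eq)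
  moreover have "(j - 1) mod int N + 1 + ((j - 1) div int N) * int N = j"
    by (metis add.commute add.left_commute diff_add_cancel mult.commute div_mult_mod_eq)
  ultimately show ?thesis by simp
qed

lemma red_range:
  assumes "N \<ge> 1"
  shows "1 \<le> (i - 1) mod int N + 1" "(i - 1) mod int N + 1 \<le> int N"
proof -
  have "int N > 0" using assms by simp
  then have "0 \<le> (i - 1) mod int N" "(i - 1) mod int N < int N" by simp_all
  then show "1 \<le> (i - 1) mod int N + 1" "(i - 1) mod int N + 1 \<le> int N" by simp_all
qed

lemma per_ext_S:
  assumes "periodic N f" "N \<ge> 1"
    and "\<And>i j. 1 \<le> i \<Longrightarrow> i \<le> int N \<Longrightarrow> 1 \<le> j \<Longrightarrow> j \<le> int N \<Longrightarrow> f i j = 0"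
  shows "f i j = 0"
  using per_red[OF assms(1,2), of i j] assms(3) red_range[OF assms(2)] by simp

lemma S2_zero_each:
  assumes "\<And>i j. 0 \<le> f i j" "S2 N f = 0" "1 \<le> i" "i \<le> int N" "1 \<le> j" "j \<le> int N"
  shows "f i j = 0"
proof -
  have "(\<Sum>j\<in>{1..int N}. f i j) = 0"
    using assms(2) unfolding S2_def
    by (subst (asm) sum_nonneg_eq_0_iff) (auto intro: sum_nonneg assms(1) simp: assms(3,4))
  then show ?thesis
    by (subst (asm) sum_nonneg_eq_0_iff) (auto intro: assms(1) simp: assms(5,6))
qed

lemma Bf_self_nonneg: "0 \<le> Bf N h f f"
  unfolding Bf_def by (rule S2_nonneg) simp

lemma lap_zero_const:
  assumes p: "periodic N g" and N: "N \<ge> 1" and h: "h \<noteq> 0"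
    and L: "\<And>i j. lap h g i j = 0"
  shows "g i j = g 0 0"
proof -
  have "Bf N h g g = - S2 N (\<lambda>i j. lap h g i j * g i j)" using sbp_lap[OF p p, of h] by simp
  also have "\<dots> = 0" using L by (simp add: S2_def)
  finally have B0: "Bf N h g g = 0" .
  have nn: "\<And>i j. 0 \<le> Dx h g i j * Dx h g i j + Dy h g i j * Dy h g i j" by simp
  have e: "Dx h g i j * Dx h g i j + Dy h g i j * Dy h g i j = 0" if "1 \<le> i" "i \<le> int N" "1 \<le> j" "j \<le> int N" for i j
    using S2_zero_each[OF nn B0[unfolded Bf_def] that] .
  have px: "periodic N (Dx h g)" by (rule per_Dx[OF p])
  have py: "periodic N (Dy h g)" by (rule per_Dy[OF p])
  have dx0: "Dx h g i j = 0" for i j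
  proof (rule per_ext_S[OF px N])
    fix i j :: int assume "1 \<le> i" "i \<le> int N" "1 \<le> j" "j \<le> int N"
    from e[OF this] show "Dx h g i j = 0"
      by (metis add_nonneg_eq_0_iff mult_eq_0_iff zero_le_square)
  qed
  have dy0: "Dy h g i j = 0" for i j
  proof (rule per_ext_S[OF py N])
    fix i j :: int assume "1 \<le> i" "i \<le> int N" "1 \<le> j" "j \<le> int N"
    from e[OF this] show "Dy h g i j = 0"
      by (metis add_nonneg_eq_0_iff mult_eq_0_iff zero_le_square)
  qed
  have sx: "g (i + 1) j = g i j" for i j using dx0[of i j] h by (simp add: Dx_def)
  have sy: "g i (j + 1) = g i j" for i j using dy0[of i j] h by (simp add: Dy_def)
  have X: "g i j = g 0 j" for i j
  proof (induction i rule: int_induct[where k=0])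
    case base then show ?case by simp
  next
    case (step1 i) then show ?case using sx[of i j] by simp
  next
    case (step2 i) then show ?case using sx[of "i - 1" j] by simp
  qed
  have Y: "g 0 j = g 0 0" for j
  proof (induction j rule: int_induct[where k=0])
    case base then show ?case by simp
  next
    case (step1 j) then show ?case using sy[of 0 j] by simp
  next
    case (step2 j) then show ?case using sy[of 0 "j - 1"] by simp
  qed
  show ?thesis using X[of i j] Y[of j] by simp
qed


definition Kop :: "nat \<Rightarrow> real \<Rightarrow> grid \<Rightarrow> grid" where
  "Kop N h g = (\<lambda>i j. - lap h g i j + S2 N g)"

lemma Kop_add: "Kop N h (\<lambda>i j. f i j + g i j) i j = Kop N h f i j + Kop N h g i j"
  by (simp add: Kop_def lap_def dx_def Dx_def dy_def Dy_def S2_add algebra_simps add_divide_distrib diff_divide_distrib)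

lemma Kop_cmult: "Kop N h (\<lambda>i j. c * f i j) i j = c * Kop N h f i j"
  by (simp add: Kop_def lap_def dx_def Dx_def dy_def Dy_def S2_cmult algebra_simps add_divide_distrib diff_divide_distrib)

lemma Kop_zero: "Kop N h (\<lambda>i j. 0) i j = 0"
  by (simp add: Kop_def lap_def dx_def Dx_def dy_def Dy_def S2_def)

lemma Kop_sum:
  assumes "finite F"
  shows "Kop N h (\<lambda>i j. \<Sum>l\<in>F. c l * e l i j) i j = (\<Sum>l\<in>F. c l * Kop N h (e l) i j)"
  using assms
proof (induction F rule: finite_induct)
  case empty then show ?case by (simp add: Kop_zero)
next
  case (insert x F)
  have "Kop N h (\<lambda>i j. \<Sum>l\<in>insert x F. c l * e l i j) i j
      = Kop N h (\<lambda>i j. c x * e x i j + (\<Sum>l\<in>F. c l * e l i j)) i j"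
    using insert by simp
  also have "\<dots> = c x * Kop N h (e x) i j + (\<Sum>l\<in>F. c l * Kop N h (e l) i j)"
    by (simp add: Kop_add Kop_cmult insert)
  finally show ?case using insert by simp
qed

lemma S2_lap: "periodic N g \<Longrightarrow> S2 N (lap h g) = 0"
proof -
  assume p: "periodic N g"
  have p1: "periodic N (\<lambda>i j. 1::real)" by (rule periodicI) simp_all
  have "S2 N (\<lambda>i j. lap h g i j * 1) = - Bf N h g (\<lambda>i j. 1)" by (rule sbp_lap[OF p p1])
  then show ?thesis by (simp add: Bf_def Dx_def Dy_def S2_def)
qed

lemma per_Kop: "periodic N g \<Longrightarrow> periodic N (Kop N h g)"
  unfolding Kop_def by (rule periodicI) (simp_all add: per_x[OF per_lap] per_y[OF per_lap])

lemma Kop_inj: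
  assumes p: "periodic N g" and N: "N \<ge> 1" and h: "h \<noteq> 0" and K: "\<And>i j. Kop N h g i j = 0"
  shows "g i j = 0"
proof -
  have "S2 N (Kop N h g) = 0" using K by (simp add: S2_def)
  moreover have "S2 N (Kop N h g) = real N ^ 2 * S2 N g"
    unfolding Kop_def using S2_lap[OF p, of h] by (simp add: S2_add S2_neg S2_const S2_diff)
  ultimately have s0: "S2 N g = 0" using N by simp
  have l0: "lap h g i j = 0" for i j using K[of i j] s0 by (simp add: Kop_def)
  have c: "g i j = g 0 0" for i j by (rule lap_zero_const[OF p N h l0])
  have "S2 N g = S2 N (\<lambda>i j. g 0 0)" by (rule S2_cong) (rule c)
  then have "S2 N g = real N ^ 2 * g 0 0" by (simp add: S2_const)
  then have "g 0 0 = 0" using s0 N by simp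
  then show ?thesis using c[of i j] by simp
qed


definition idx :: "nat \<Rightarrow> int \<Rightarrow> int \<Rightarrow> nat" where
  "idx N i j = nat ((i - 1) mod int N) * N + nat ((j - 1) mod int N)"
definition ptx :: "nat \<Rightarrow> nat \<Rightarrow> int" where "ptx N k = int (k div N) + 1"
definition pty :: "nat \<Rightarrow> nat \<Rightarrow> int" where "pty N k = int (k mod N) + 1"
definition ext :: "nat \<Rightarrow> real vec \<Rightarrow> grid" where "ext N v = (\<lambda>i j. v $ idx N i j)"

lemma idx_lt:
  assumes "N \<ge> 1" shows "idx N i j < N * N"
proof -
  have N: "int N > 0" using assms by simp
  have a: "nat ((i - 1) mod int N) < N" "nat ((j - 1) mod int N) < N"
    using N by (simp_all add: nat_less_iff)
  then have "nat ((i - 1) mod int N) * N + nat ((j - 1) mod int N) < nat ((i - 1) mod int N) * N + N" by simp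
  also have "\<dots> \<le> (N - 1) * N + N" using a by (intro add_right_mono mult_right_mono) auto
  also have "\<dots> = N * N" using assms by (cases N) auto
  finally show ?thesis unfolding idx_def .
qed

lemma idx_pt:
  assumes "N \<ge> 1" "k < N * N" shows "idx N (ptx N k) (pty N k) = k"
proof -
  have "k div N < N" using assms by (simp add: less_mult_imp_div_less)
  then have a: "(int (k div N)) mod int N = int (k div N)" by simp
  have b: "(int (k mod N)) mod int N = int (k mod N)" using assms by simp
  show ?thesis unfolding idx_def ptx_def pty_def using a b by (simp add: div_mult_mod_eq)
qed

lemma pt_idx:
  assumes "N \<ge> 1" "1 \<le> i" "i \<le> int N" "1 \<le> j" "j \<le> int N"
  shows "ptx N (idx N i j) = i" "pty N (idx N i j) = j"
proof -
  have a: "(i - 1) mod int N = i - 1" "(j - 1) mod int N = j - 1" using assms by simp_all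
  have b: "nat (j - 1) < N" using assms by simp
  show "ptx N (idx N i j) = i" unfolding idx_def ptx_def a using assms b by simp
  show "pty N (idx N i j) = j" unfolding idx_def pty_def a using assms b by simp
qed

lemma per_ext: "periodic N (ext N v)"
proof (rule periodicI)
  fix i j
  have "(i + int N - 1) mod int N = (i - 1) mod int N"
    by (metis add.commute add_diff_eq mod_add_self2)
  then show "ext N v (i + int N) j = ext N v i j" by (simp add: ext_def idx_def)
  have "(j + int N - 1) mod int N = (j - 1) mod int N"
    by (metis add.commute add_diff_eq mod_add_self2)
  then show "ext N v i (j + int N) = ext N v i j" by (simp add: ext_def idx_def)
qed

lemma ext_decomp:
  assumes "N \<ge> 1"
  shows "ext N v i j = (\<Sum>l\<in>{0..<N*N}. v $ l * ext N (unit_vec (N*N) l) i j)"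
proof -
  have lt: "idx N i j < N * N" by (rule idx_lt[OF assms])
  have "(\<Sum>l\<in>{0..<N*N}. v $ l * ext N (unit_vec (N*N) l) i j)
      = (\<Sum>l\<in>{0..<N*N}. if l = idx N i j then v $ l else 0)"
    by (rule sum.cong) (auto simp: ext_def lt)
  also have "\<dots> = v $ idx N i j" using lt by simp
  finally show ?thesis by (simp add: ext_def)
qed

definition Kmat :: "nat \<Rightarrow> real \<Rightarrow> real mat" where
  "Kmat N h = mat (N*N) (N*N) (\<lambda>(k,l). Kop N h (ext N (unit_vec (N*N) l)) (ptx N k) (pty N k))"

lemma Kmat_index: "k < N*N \<Longrightarrow> l < N*N \<Longrightarrow> Kmat N h $$ (k, l) = Kop N h (ext N (unit_vec (N*N) l)) (ptx N k) (pty N k)"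
  unfolding Kmat_def by (rule trans[OF index_mat(1)]) auto
lemma Kmat_dim: "dim_row (Kmat N h) = N*N" "dim_col (Kmat N h) = N*N"
  unfolding Kmat_def by simp_all

lemma Kmat_mv:
  assumes N: "N \<ge> 1" and v: "v \<in> carrier_vec (N*N)" and k: "k < N*N"
  shows "(Kmat N h *\<^sub>v v) $ k = Kop N h (ext N v) (ptx N k) (pty N k)"
proof -
  have dv: "dim_vec v = N*N" using v by simp
  have "(Kmat N h *\<^sub>v v) $ k = row (Kmat N h) k \<bullet> v"
    by (rule index_mult_mat_vec) (simp add: Kmat_dim k)
  also have "\<dots> = (\<Sum>l\<in>{0..<N*N}. row (Kmat N h) k $ l * v $ l)"
    unfolding scalar_prod_def dv ..
  also have "\<dots> = (\<Sum>l\<in>{0..<N*N}. v $ l * Kop N h (ext N (unit_vec (N*N) l)) (ptx N k) (pty N k))"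
  proof (rule sum.cong[OF refl])
    fix l assume "l \<in> {0..<N*N}"
    then have l: "l < N*N" by simp
    have "row (Kmat N h) k $ l = Kmat N h $$ (k, l)" by (rule index_row(1)) (simp_all add: Kmat_dim l k)
    then show "row (Kmat N h) k $ l * v $ l = v $ l * Kop N h (ext N (unit_vec (N*N) l)) (ptx N k) (pty N k)"
      using Kmat_index[OF k l] by simp
  qed
  also have "\<dots> = Kop N h (\<lambda>i j. \<Sum>l\<in>{0..<N*N}. v $ l * ext N (unit_vec (N*N) l) i j) (ptx N k) (pty N k)"
    by (rule Kop_sum[symmetric]) simp
  also have "(\<lambda>i j. \<Sum>l\<in>{0..<N*N}. v $ l * ext N (unit_vec (N*N) l) i j) = ext N v"
    by (intro ext) (rule ext_decomp[OF N, symmetric])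
  finally show ?thesis .
qed

lemma Kop_surj:
  assumes N: "N \<ge> 1" and h: "h \<noteq> 0" and pf: "periodic N f"
  shows "\<exists>g. periodic N g \<and> (\<forall>i j. Kop N h g i j = f i j)"
proof -
  let ?n = "N * N"
  have A: "Kmat N h \<in> carrier_mat ?n ?n" by (simp add: Kmat_def)
  have "det (Kmat N h) \<noteq> 0"
  proof
    assume "det (Kmat N h) = 0"
    then obtain v where v: "v \<in> carrier_vec ?n" "v \<noteq> 0\<^sub>v ?n" "Kmat N h *\<^sub>v v = 0\<^sub>v ?n"
      using det_0_iff_vec_prod_zero_field[OF A] by blast
    have z: "Kop N h (ext N v) i j = 0" for i j
    proof (rule per_ext_S[OF per_Kop[OF per_ext] N])
      fix i j :: int assume ij: "1 \<le> i" "i \<le> int N" "1 \<le> j" "j \<le> int N"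
      have "(Kmat N h *\<^sub>v v) $ idx N i j = 0" using v(3) idx_lt[OF N] by simp
      then show "Kop N h (ext N v) i j = 0"
        using Kmat_mv[OF N v(1) idx_lt[OF N]] pt_idx[OF N ij] by simp
    qed
    have "ext N v i j = 0" for i j by (rule Kop_inj[OF per_ext N h z])
    then have "v $ k = 0" if "k < ?n" for k
      using that idx_pt[OF N that] by (metis ext_def)
    then have "v = 0\<^sub>v ?n" using v(1) by (intro eq_vecI) auto
    with v(2) show False by simp
  qed
  from det_non_zero_imp_unit[OF A this, of "()"]
  obtain B where B: "B \<in> carrier_mat ?n ?n" "Kmat N h * B = 1\<^sub>m ?n"
    unfolding Units_def ring_mat_def by auto
  define b where "b = vec ?n (\<lambda>k. f (ptx N k) (pty N k))"
  have bc: "b \<in> carrier_vec ?n" by (simp add: b_def)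
  define v where "v = B *\<^sub>v b"
  have vc: "v \<in> carrier_vec ?n" using B(1) bc by (simp add: v_def)
  have Av: "Kmat N h *\<^sub>v v = b"
    unfolding v_def using assoc_mult_mat_vec[OF A B(1) bc] B(2) one_mult_mat_vec[OF bc] by simp
  have "Kop N h (ext N v) i j = f i j" for i j
  proof -
    have d: "periodic N (\<lambda>i j. Kop N h (ext N v) i j - f i j)"
      using per_Kop[OF per_ext, of N h v] pf by (intro periodicI) (simp_all add: per_x per_y)
    have "Kop N h (ext N v) i j - f i j = 0"
    proof (rule per_ext_S[OF d N])
      fix i j :: int assume ij: "1 \<le> i" "i \<le> int N" "1 \<le> j" "j \<le> int N"
      have "(Kmat N h *\<^sub>v v) $ idx N i j = f i j"
        unfolding Av b_def using idx_lt[OF N] pt_idx[OF N ij] by simp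
      then show "Kop N h (ext N v) i j - f i j = 0"
        using Kmat_mv[OF N vc idx_lt[OF N]] pt_idx[OF N ij] by simp
    qed
    then show ?thesis by simp
  qed
  then show ?thesis using per_ext by blast
qed

lemma poisson_exists:
  assumes N: "N \<ge> 1" and h: "h \<noteq> 0" and pf: "periodic N f" and s: "S2 N f = 0"
  shows "\<exists>g. periodic N g \<and> S2 N g = 0 \<and> (\<forall>i j. - lap h g i j = f i j)"
proof -
  obtain g where g: "periodic N g" "\<And>i j. Kop N h g i j = f i j" using Kop_surj[OF N h pf] by blast
  have "S2 N (Kop N h g) = real N ^ 2 * S2 N g"
    unfolding Kop_def using S2_lap[OF g(1), of h] by (simp add: S2_add S2_neg S2_const S2_diff)
  moreover have "S2 N (Kop N h g) = S2 N f" using g(2) by (simp add: S2_def)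
  ultimately have s0: "S2 N g = 0" using s N by simp
  have "- lap h g i j = f i j" for i j using g(2)[of i j] s0 by (simp add: Kop_def)
  then show ?thesis using g(1) s0 by blast
qed


lemma gip_S2: "gip L N a b = (L / real N)^2 * S2 N (\<lambda>i j. a i j * b i j)"
  unfolding gip_def S2_def ..

lemma gmean_S2: "L > 0 \<Longrightarrow> N \<ge> 1 \<Longrightarrow> gmean L N f = S2 N f / real N ^ 2"
  unfolding gmean_def gip_S2 by (simp add: power_divide)

lemma lap_formula: "lap h f i j = ((f (i+1) j - 2 * f i j + f (i-1) j) + (f i (j+1) - 2 * f i j + f i (j-1))) / h^2"
  by (cases "h = 0") (simp_all add: lap_def dx_def Dx_def dy_def Dy_def field_simps power2_eq_square)

lemma lap_diff: "lap h (\<lambda>i j. f i j - g i j) i j = lap h f i j - lap h g i j"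
  unfolding lap_formula by (simp add: diff_divide_distrib[symmetric] algebra_simps)

lemma lap_divc: "lap h (\<lambda>i j. f i j / c) i j = lap h f i j / c"
  unfolding lap_formula by (simp add: diff_divide_distrib[symmetric] add_divide_distrib[symmetric] algebra_simps)

lemma per_diff: "periodic N f \<Longrightarrow> periodic N g \<Longrightarrow> periodic N (\<lambda>i j. f i j - g i j)"
  by (rule periodicI) (simp_all add: per_x per_y)
lemma per_divc: "periodic N f \<Longrightarrow> periodic N (\<lambda>i j. f i j / c)"
  by (rule periodicI) (simp_all add: per_x per_y)

definition PSol :: "real \<Rightarrow> nat \<Rightarrow> grid \<Rightarrow> grid \<Rightarrow> bool" where
  "PSol L N f \<psi> \<longleftrightarrow> periodic N \<psi> \<and> gmean L N \<psi> = 0 \<and> (\<forall>i j. - lap (L / real N) \<psi> i j = f i j)"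

lemma PSol_unique:
  assumes L: "L > 0" and N: "N \<ge> 1" and a: "PSol L N f g1" and b: "PSol L N f g2"
  shows "g1 = g2"
proof -
  let ?h = "L / real N"
  have h: "?h \<noteq> 0" using L N by simp
  let ?d = "\<lambda>i j. g1 i j - g2 i j"
  have pd: "periodic N ?d" using a b unfolding PSol_def by (intro per_diff) auto
  have l0: "lap ?h ?d i j = 0" for i j using a b unfolding PSol_def lap_diff
    by (metis add.inverse_inverse diff_self)
  have c: "?d i j = ?d 0 0" for i j by (rule lap_zero_const[OF pd N h l0])
  have s: "S2 N ?d = 0" using a b L N unfolding PSol_def by (simp add: gmean_S2 S2_diff)
  have "S2 N ?d = S2 N (\<lambda>i j. ?d 0 0)" by (rule S2_cong) (rule c)
  then have "?d 0 0 = 0" using s N by (simp add: S2_const)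
  then have "?d i j = 0" for i j using c[of i j] by simp
  then show ?thesis by (intro ext) simp
qed

lemma PSol_exists:
  assumes L: "L > 0" and N: "N \<ge> 1" and pf: "periodic N f" and s: "S2 N f = 0"
  shows "\<exists>g. PSol L N f g"
proof -
  have h: "L / real N \<noteq> 0" using L N by simp
  obtain g where "periodic N g" "S2 N g = 0" "\<forall>i j. - lap (L / real N) g i j = f i j"
    using poisson_exists[OF N h pf s] by blast
  then show ?thesis unfolding PSol_def using L N by (auto simp: gmean_S2)
qed

lemma invlap_PSol:
  assumes L: "L > 0" and N: "N \<ge> 1" and pf: "periodic N f" and s: "S2 N f = 0"
  shows "PSol L N f (invlap L N f)"
proof -
  have "\<exists>!g. PSol L N f g" using PSol_exists[OF assms] PSol_unique[OF L N] by blast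
  then show ?thesis unfolding invlap_def PSol_def[symmetric] by (rule theI')
qed

lemma invlap_eq:
  assumes L: "L > 0" and N: "N \<ge> 1" and pf: "periodic N f" and s: "S2 N f = 0" and g: "PSol L N f g"
  shows "invlap L N f = g"
  using PSol_unique[OF L N invlap_PSol[OF L N pf s] g] .

lemma hm1_norm_sq:
  assumes L: "L > 0" and N: "N \<ge> 1" and pf: "periodic N f" and s: "S2 N f = 0"
  shows "(hm1_norm L N (\<lambda>i j. f i j / dt))^2 = (L / real N)^2 * Bf N (L / real N) (invlap L N f) (invlap L N f) / dt^2"
proof -
  let ?h = "L / real N"
  let ?P = "invlap L N f"
  have P: "PSol L N f ?P" by (rule invlap_PSol[OF assms])
  have pP: "periodic N ?P" using P unfolding PSol_def by simp
  have "PSol L N (\<lambda>i j. f i j / dt) (\<lambda>i j. ?P i j / dt)"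
    using P L N unfolding PSol_def by (auto simp: per_divc lap_divc gmean_S2 S2_divc minus_divide_left)
  moreover have s': "S2 N (\<lambda>i j. f i j / dt) = 0" by (simp add: S2_divc s)
  ultimately have e: "invlap L N (\<lambda>i j. f i j / dt) = (\<lambda>i j. ?P i j / dt)"
    using invlap_eq[OF L N per_divc[OF pf]] by blast
  have "hm1_ip L N (\<lambda>i j. f i j / dt) (\<lambda>i j. f i j / dt) = ?h^2 * S2 N (\<lambda>i j. f i j * ?P i j) / dt^2"
    unfolding hm1_ip_def e gip_S2 by (simp add: power2_eq_square S2_divc)
  also have "S2 N (\<lambda>i j. f i j * ?P i j) = S2 N (\<lambda>i j. - (lap ?h ?P i j * ?P i j))"
    using P unfolding PSol_def by (intro S2_cong) (metis minus_mult_left)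
  also have "\<dots> = Bf N ?h ?P ?P" using sbp_lap[OF pP pP, of ?h] by (simp add: S2_neg)
  finally have *: "hm1_ip L N (\<lambda>i j. f i j / dt) (\<lambda>i j. f i j / dt) = ?h^2 * Bf N ?h ?P ?P / dt^2" .
  have "0 \<le> hm1_ip L N (\<lambda>i j. f i j / dt) (\<lambda>i j. f i j / dt)" unfolding * using Bf_self_nonneg by simp
  then show ?thesis unfolding hm1_norm_def * by simp
qed


lemma g_tan:
  fixes k m x y :: real
  assumes "k > 0" "m > 0" "x > 0" "y > 0"
  shows "y * ln (k * y / m) - x * ln (k * x / m) \<le> (ln (k * y / m) + 1) * (y - x)"
proof -
  have e: "ln (k * y / m) - ln (k * x / m) = ln (y / x)"
    using assms by (simp add: ln_div ln_mult)
  have "ln (y / x) \<le> y / x - 1" using assms by (intro ln_le_minus_one) simp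
  then have "x * ln (y / x) \<le> x * (y / x - 1)" using assms by (intro mult_left_mono) auto
  also have "\<dots> = y - x" using assms by (simp add: field_simps)
  finally have "x * (ln (k * y / m) - ln (k * x / m)) \<le> y - x" using e by simp
  then show ?thesis by (simp add: algebra_simps)
qed

lemma alpha_pos: "M0 > 0 \<Longrightarrow> N0 > 0 \<Longrightarrow> alphaC M0 N0 > 0"
proof -
  assume "M0 > 0" "N0 > 0"
  then have "sqrt (M0 / pi) + N0 / 2 > 0" by (intro add_nonneg_pos) auto
  then show ?thesis unfolding alphaC_def by simp
qed
lemma beta_pos: "M0 > 0 \<Longrightarrow> N0 > 0 \<Longrightarrow> betaC M0 N0 > 0"
  unfolding betaC_def by (intro add_nonneg_pos) auto

lemma S_tan:
  assumes M0: "M0 > 0" and N0: "N0 > 0"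
    and a: "a > 0" "b > 0" "a + b < 1" and a': "a' > 0" "b' > 0" "a' + b' < 1"
  shows "Sfun M0 N0 a' b' - Sfun M0 N0 a b \<le> dSa M0 N0 a' b' * (a' - a) + dSb M0 N0 a' b' * (b' - b)"
proof -
  have t1: "a' * ln (alphaC M0 N0 * a' / M0) - a * ln (alphaC M0 N0 * a / M0) \<le> (ln (alphaC M0 N0 * a' / M0) + 1) * (a' - a)"
    by (rule g_tan) (use alpha_pos[OF M0 N0] M0 a a' in auto)
  have t2: "b' * ln (betaC M0 N0 * b' / N0) - b * ln (betaC M0 N0 * b / N0) \<le> (ln (betaC M0 N0 * b' / N0) + 1) * (b' - b)"
    by (rule g_tan) (use beta_pos[OF M0 N0] N0 a a' in auto)
  have t3: "(1 - a' - b') * ln (1 * (1 - a' - b') / 1) - (1 - a - b) * ln (1 * (1 - a - b) / 1) \<le> (ln (1 * (1 - a' - b') / 1) + 1) * ((1 - a' - b') - (1 - a - b))"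
    by (rule g_tan) (use a a' in auto)
  have t1': "a' / M0 * ln (alphaC M0 N0 * a' / M0) - a / M0 * ln (alphaC M0 N0 * a / M0) \<le> (ln (alphaC M0 N0 * a' / M0) + 1) * (a' - a) / M0"
    using divide_right_mono[OF t1, of M0] M0 by (simp add: diff_divide_distrib)
  have t2': "b' / N0 * ln (betaC M0 N0 * b' / N0) - b / N0 * ln (betaC M0 N0 * b / N0) \<le> (ln (betaC M0 N0 * b' / N0) + 1) * (b' - b) / N0"
    using divide_right_mono[OF t2, of N0] N0 by (simp add: diff_divide_distrib)
  have e1: "Sfun M0 N0 a' b' - Sfun M0 N0 a b =
     (a' / M0 * ln (alphaC M0 N0 * a' / M0) - a / M0 * ln (alphaC M0 N0 * a / M0))
   + (b' / N0 * ln (betaC M0 N0 * b' / N0) - b / N0 * ln (betaC M0 N0 * b / N0))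
   + ((1 - a' - b') * ln (1 * (1 - a' - b') / 1) - (1 - a - b) * ln (1 * (1 - a - b) / 1))"
    unfolding Sfun_def by simp
  have e2: "dSa M0 N0 a' b' * (a' - a) + dSb M0 N0 a' b' * (b' - b) =
     (ln (alphaC M0 N0 * a' / M0) + 1) * (a' - a) / M0 + (ln (betaC M0 N0 * b' / N0) + 1) * (b' - b) / N0
     + (ln (1 * (1 - a' - b') / 1) + 1) * ((1 - a' - b') - (1 - a - b))"
    unfolding dSa_def dSb_def by (simp add: algebra_simps add_divide_distrib diff_divide_distrib)
  show ?thesis unfolding e1 e2 using t1' t2' t3 by linarith
qed

lemma face_tan:
  fixes s s0 p p0 :: real
  assumes "s > 0" "s0 > 0"
  shows "kappa s * p^2 + 2 * kappa s * p * (p0 - p) + kappa' s * p^2 * (s0 - s) \<le> kappa s0 * p0^2"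
proof -
  have "0 \<le> (p0 * s - p * s0)^2" by simp
  then have "2 * p * p0 * s * s0 - p^2 * s0^2 \<le> p0^2 * s^2"
    by (simp add: power2_eq_square algebra_simps)
  then have "(2 * p * p0 * s * s0 - p^2 * s0^2) / (36 * s^2 * s0) \<le> p0^2 * s^2 / (36 * s^2 * s0)"
    using assms by (intro divide_right_mono) auto
  moreover have "(2 * p * p0 * s * s0 - p^2 * s0^2) / (36 * s^2 * s0) = kappa s * p^2 + 2 * kappa s * p * (p0 - p) + kappa' s * p^2 * (s0 - s)"
    using assms unfolding kappa_def kappa'_def by (simp add: field_simps power2_eq_square)
  moreover have "p0^2 * s^2 / (36 * s^2 * s0) = kappa s0 * p0^2"
    using assms unfolding kappa_def by (simp add: field_simps power2_eq_square)
  ultimately show ?thesis by simp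
qed

lemma H_pt:
  fixes c12 c13 c23 a0 a a' b0 b b' :: real
  assumes c: "c12 > 0" "c13 > 0" "c23 > 0"
  defines "C \<equiv> 3 * c13 + 3 * c23 + 2 * c12"
    and "K1 \<equiv> (2 * c12 + 3 * c13 + c23) / 2" and "K2 \<equiv> (2 * c12 + c13 + 3 * c23) / 2"
  shows "Hfun c12 c13 c23 a' b' - Hfun c12 c13 c23 a b
          - dHa c12 c13 c23 (2 * a - a0) (2 * b - b0) * (a' - a) - dHb c12 c13 c23 (2 * a - a0) (2 * b - b0) * (b' - b)
       \<le> (C - K1) * (a' - a)^2 + (C - K2) * (b' - b)^2 + K1 * (a - a0)^2 + K2 * (b - b0)^2"
proof -
  define d where "d = c12 - c13 - c23"
  define x1 where "x1 = a - a0"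
  define x2 where "x2 = b - b0"
  define y1 where "y1 = a' - a"
  define y2 where "y2 = b' - b"
  have a': "a' = a + y1" and b': "b' = b + y2" and a0: "a0 = a - x1" and b0: "b0 = b - x2"
    by (simp_all add: x1_def x2_def y1_def y2_def)
  have L: "Hfun c12 c13 c23 a' b' - Hfun c12 c13 c23 a b
          - dHa c12 c13 c23 (2 * a - a0) (2 * b - b0) * (a' - a) - dHb c12 c13 c23 (2 * a - a0) (2 * b - b0) * (b' - b)
        = - c13 * y1^2 - c23 * y2^2 + d * y1 * y2 + 2 * c13 * x1 * y1 + 2 * c23 * x2 * y2 - d * (x1 * y2 + x2 * y1)"
    unfolding a' b' a0 b0 Hfun_def dHa_def dHb_def d_def by (simp add: power2_eq_square algebra_simps)
  have R: "(C - K1) * (a' - a)^2 + (C - K2) * (b' - b)^2 + K1 * (a - a0)^2 + K2 * (b - b0)^2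
        = (C - K1) * y1^2 + (C - K2) * y2^2 + K1 * x1^2 + K2 * x2^2"
    by (simp add: x1_def x2_def y1_def y2_def)
  show ?thesis
  proof (cases "d \<ge> 0")
    case True
    have id: "(C - K1) * y1^2 + (C - K2) * y2^2 + K1 * x1^2 + K2 * x2^2
       - (- c13 * y1^2 - c23 * y2^2 + d * y1 * y2 + 2 * c13 * x1 * y1 + 2 * c23 * x2 * y2 - d * (x1 * y2 + x2 * y1))
      = c13 * (x1 - y1)^2 + c23 * (x2 - y2)^2 + (d/2) * (x1 + y2)^2 + (d/2) * (x2 + y1)^2 + (d/2) * (y1 - y2)^2
        + (c12/2 + c13 + c23) * x1^2 + (c12/2 + c13 + c23) * x2^2 + (5/2*c13 + 7/2*c23) * y1^2 + (7/2*c13 + 5/2*c23) * y2^2"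
      unfolding C_def K1_def K2_def d_def by (simp add: power2_eq_square field_simps)
    have "0 \<le> c13 * (x1 - y1)^2 + c23 * (x2 - y2)^2 + (d/2) * (x1 + y2)^2 + (d/2) * (x2 + y1)^2 + (d/2) * (y1 - y2)^2
        + (c12/2 + c13 + c23) * x1^2 + (c12/2 + c13 + c23) * x2^2 + (5/2*c13 + 7/2*c23) * y1^2 + (7/2*c13 + 5/2*c23) * y2^2"
      using True c by (intro add_nonneg_nonneg mult_nonneg_nonneg) auto
    then show ?thesis using id L R by linarith
  next
    case False
    have id: "(C - K1) * y1^2 + (C - K2) * y2^2 + K1 * x1^2 + K2 * x2^2
       - (- c13 * y1^2 - c23 * y2^2 + d * y1 * y2 + 2 * c13 * x1 * y1 + 2 * c23 * x2 * y2 - d * (x1 * y2 + x2 * y1))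
      = c13 * (x1 - y1)^2 + c23 * (x2 - y2)^2 + (-d/2) * (x1 - y2)^2 + (-d/2) * (x2 - y1)^2 + (-d/2) * (y1 + y2)^2
        + (3/2 * c12) * x1^2 + (3/2 * c12) * x2^2 + (2*c12 + 1/2*c13 + 3/2*c23) * y1^2 + (2*c12 + 3/2*c13 + 1/2*c23) * y2^2"
      unfolding C_def K1_def K2_def d_def by (simp add: power2_eq_square field_simps)
    have "0 \<le> c13 * (x1 - y1)^2 + c23 * (x2 - y2)^2 + (-d/2) * (x1 - y2)^2 + (-d/2) * (x2 - y1)^2 + (-d/2) * (y1 + y2)^2
        + (3/2 * c12) * x1^2 + (3/2 * c12) * x2^2 + (2*c12 + 1/2*c13 + 3/2*c23) * y1^2 + (2*c12 + 3/2*c13 + 1/2*c23) * y2^2"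
      using False c by (intro add_nonneg_nonneg mult_nonneg_nonneg) auto
    then show ?thesis using id L R by linarith
  qed
qed


lemma per_const: "periodic N (\<lambda>i j. c)"
  by (rule periodicI) simp_all

lemma gnorm2_sq: "(gnorm2 L N f)^2 = (L / real N)^2 * S2 N (\<lambda>i j. f i j * f i j)"
proof -
  have "0 \<le> S2 N (\<lambda>i j. f i j * f i j)" by (rule S2_nonneg) simp
  then have "0 \<le> gip L N f f" unfolding gip_S2 by simp
  then show ?thesis unfolding gnorm2_def by (simp add: gip_S2)
qed

definition Fx :: "real \<Rightarrow> grid \<Rightarrow> grid" where
  "Fx h u = (\<lambda>i j. kappa (Ax u i j) * (Dx h u i j)^2)"
definition Fy :: "real \<Rightarrow> grid \<Rightarrow> grid" where
  "Fy h u = (\<lambda>i j. kappa (Ay u i j) * (Dy h u i j)^2)"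

lemma per_Fx: "periodic N u \<Longrightarrow> periodic N (Fx h u)"
  unfolding Fx_def by (rule periodicI) (simp_all add: per_x[OF per_Ax] per_y[OF per_Ax] per_x[OF per_Dx] per_y[OF per_Dx])
lemma per_Fy: "periodic N u \<Longrightarrow> periodic N (Fy h u)"
  unfolding Fy_def by (rule periodicI) (simp_all add: per_x[OF per_Ay] per_y[OF per_Ay] per_x[OF per_Dy] per_y[OF per_Dy])

lemma grad_term_S2:
  assumes "periodic N u"
  shows "grad_term L N u = (L / real N)^2 * S2 N (\<lambda>i j. Fx (L / real N) u i j + Fy (L / real N) u i j)"
proof -
  let ?h = "L / real N"
  have "S2 N (\<lambda>i j. (ax (Fx ?h u) i j + ay (Fy ?h u) i j) * 1)
      = S2 N (\<lambda>i j. ax (Fx ?h u) i j * 1) + S2 N (\<lambda>i j. ay (Fy ?h u) i j * 1)"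
    by (simp add: S2_add[symmetric])
  also have "\<dots> = S2 N (\<lambda>i j. Fx ?h u i j * Ax (\<lambda>i j. 1) i j) + S2 N (\<lambda>i j. Fy ?h u i j * Ay (\<lambda>i j. 1) i j)"
    by (simp only: sbp_ax[OF per_Fx[OF assms] per_const] sbp_ay[OF per_Fy[OF assms] per_const])
  also have "\<dots> = S2 N (\<lambda>i j. Fx ?h u i j + Fy ?h u i j)"
    by (simp add: Ax_def Ay_def S2_add)
  finally show ?thesis unfolding grad_term_def gip_S2 Fx_def[symmetric] Fy_def[symmetric]
    by simp
qed

lemma Tk_S2:
  assumes pu: "periodic N u" and pw: "periodic N w"
  shows "S2 N (\<lambda>i j. Tk h u i j * w i j) =
    S2 N (\<lambda>i j. kappa' (Ax u i j) * (Dx h u i j)^2 * Ax w i j + 2 * (kappa (Ax u i j) * Dx h u i j) * Dx h w i j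
              + kappa' (Ay u i j) * (Dy h u i j)^2 * Ay w i j + 2 * (kappa (Ay u i j) * Dy h u i j) * Dy h w i j)"
proof -
  define F1 where "F1 = (\<lambda>i j. kappa' (Ax u i j) * (Dx h u i j)^2)"
  define F2 where "F2 = (\<lambda>i j. kappa (Ax u i j) * Dx h u i j)"
  define F3 where "F3 = (\<lambda>i j. kappa' (Ay u i j) * (Dy h u i j)^2)"
  define F4 where "F4 = (\<lambda>i j. kappa (Ay u i j) * Dy h u i j)"
  have p1: "periodic N F1" unfolding F1_def
    by (rule periodicI) (simp_all add: per_x[OF per_Ax[OF pu]] per_y[OF per_Ax[OF pu]] per_x[OF per_Dx[OF pu]] per_y[OF per_Dx[OF pu]])
  have p2: "periodic N F2" unfolding F2_def
    by (rule periodicI) (simp_all add: per_x[OF per_Ax[OF pu]] per_y[OF per_Ax[OF pu]] per_x[OF per_Dx[OF pu]] per_y[OF per_Dx[OF pu]])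
  have p3: "periodic N F3" unfolding F3_def
    by (rule periodicI) (simp_all add: per_x[OF per_Ay[OF pu]] per_y[OF per_Ay[OF pu]] per_x[OF per_Dy[OF pu]] per_y[OF per_Dy[OF pu]])
  have p4: "periodic N F4" unfolding F4_def
    by (rule periodicI) (simp_all add: per_x[OF per_Ay[OF pu]] per_y[OF per_Ay[OF pu]] per_x[OF per_Dy[OF pu]] per_y[OF per_Dy[OF pu]])
  have "S2 N (\<lambda>i j. Tk h u i j * w i j) = S2 N (\<lambda>i j. ax F1 i j * w i j + (- 2) * (dx h F2 i j * w i j)
        + ay F3 i j * w i j + (- 2) * (dy h F4 i j * w i j))"
    unfolding Tk_def F1_def F2_def F3_def F4_def by (rule S2_cong) (simp add: algebra_simps)
  also have "\<dots> = S2 N (\<lambda>i j. ax F1 i j * w i j) + (- 2) * S2 N (\<lambda>i j. dx h F2 i j * w i j)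
        + S2 N (\<lambda>i j. ay F3 i j * w i j) + (- 2) * S2 N (\<lambda>i j. dy h F4 i j * w i j)"
    by (simp only: S2_add S2_cmult)
  also have "\<dots> = S2 N (\<lambda>i j. F1 i j * Ax w i j) + 2 * S2 N (\<lambda>i j. F2 i j * Dx h w i j)
        + S2 N (\<lambda>i j. F3 i j * Ay w i j) + 2 * S2 N (\<lambda>i j. F4 i j * Dy h w i j)"
    by (simp add: sbp_ax[OF p1 pw] sbp_dx[OF p2 pw] sbp_ay[OF p3 pw] sbp_dy[OF p4 pw])
  also have "\<dots> = S2 N (\<lambda>i j. F1 i j * Ax w i j + 2 * (F2 i j * Dx h w i j) + F3 i j * Ay w i j + 2 * (F4 i j * Dy h w i j))"
    by (simp only: S2_add S2_cmult)
  finally show ?thesis unfolding F1_def F2_def F3_def F4_def by (simp add: algebra_simps)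
qed

lemma Ax_diff: "Ax (\<lambda>i j. v i j - u i j) i j = Ax v i j - Ax u i j"
  unfolding Ax_def by argo
lemma Ay_diff: "Ay (\<lambda>i j. v i j - u i j) i j = Ay v i j - Ay u i j"
  unfolding Ay_def by argo
lemma Dx_diff: "Dx h (\<lambda>i j. v i j - u i j) i j = Dx h v i j - Dx h u i j"
  unfolding Dx_def by argo
lemma Dy_diff: "Dy h (\<lambda>i j. v i j - u i j) i j = Dy h v i j - Dy h u i j"
  unfolding Dy_def by argo

lemma grad_tan:
  assumes pu: "periodic N u" and pv: "periodic N v" and upos: "\<And>i j. u i j > 0" and vpos: "\<And>i j. v i j > 0"
  shows "grad_term L N u + (L / real N)^2 * S2 N (\<lambda>i j. Tk (L / real N) u i j * (v i j - u i j)) \<le> grad_term L N v"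
proof -
  let ?h = "L / real N"
  have pw: "periodic N (\<lambda>i j. v i j - u i j)" by (rule per_diff[OF pv pu])
  note axw = Ax_diff[of v u] and ayw = Ay_diff[of v u] and dxw = Dx_diff[of ?h v u] and dyw = Dy_diff[of ?h v u]
  have "S2 N (\<lambda>i j. Fx ?h u i j + Fy ?h u i j) + S2 N (\<lambda>i j. Tk ?h u i j * (v i j - u i j))
       = S2 N (\<lambda>i j. (kappa (Ax u i j) * (Dx ?h u i j)^2 + 2 * kappa (Ax u i j) * Dx ?h u i j * (Dx ?h v i j - Dx ?h u i j) + kappa' (Ax u i j) * (Dx ?h u i j)^2 * (Ax v i j - Ax u i j))
                   + (kappa (Ay u i j) * (Dy ?h u i j)^2 + 2 * kappa (Ay u i j) * Dy ?h u i j * (Dy ?h v i j - Dy ?h u i j) + kappa' (Ay u i j) * (Dy ?h u i j)^2 * (Ay v i j - Ay u i j)))"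
    unfolding Tk_S2[OF pu pw] S2_add[symmetric] axw ayw dxw dyw Fx_def Fy_def
    by (rule S2_cong) (simp add: algebra_simps)
  also have "\<dots> \<le> S2 N (\<lambda>i j. Fx ?h v i j + Fy ?h v i j)"
    unfolding Fx_def Fy_def
  proof (rule S2_mono, rule add_mono)
    fix i j
    show "kappa (Ax u i j) * (Dx ?h u i j)^2 + 2 * kappa (Ax u i j) * Dx ?h u i j * (Dx ?h v i j - Dx ?h u i j) + kappa' (Ax u i j) * (Dx ?h u i j)^2 * (Ax v i j - Ax u i j) \<le> kappa (Ax v i j) * (Dx ?h v i j)^2"
      by (rule face_tan) (use upos vpos in \<open>auto simp: Ax_def intro: add_pos_pos\<close>)
    show "kappa (Ay u i j) * (Dy ?h u i j)^2 + 2 * kappa (Ay u i j) * Dy ?h u i j * (Dy ?h v i j - Dy ?h u i j) + kappa' (Ay u i j) * (Dy ?h u i j)^2 * (Ay v i j - Ay u i j) \<le> kappa (Ay v i j) * (Dy ?h v i j)^2"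
      by (rule face_tan) (use upos vpos in \<open>auto simp: Ay_def intro: add_pos_pos\<close>)
  qed
  finally have *: "S2 N (\<lambda>i j. Fx ?h u i j + Fy ?h u i j) + S2 N (\<lambda>i j. Tk ?h u i j * (v i j - u i j)) \<le> S2 N (\<lambda>i j. Fx ?h v i j + Fy ?h v i j)" .
  have "?h^2 * (S2 N (\<lambda>i j. Fx ?h u i j + Fy ?h u i j) + S2 N (\<lambda>i j. Tk ?h u i j * (v i j - u i j))) \<le> ?h^2 * S2 N (\<lambda>i j. Fx ?h v i j + Fy ?h v i j)"
    by (rule mult_left_mono[OF *]) simp
  then show ?thesis unfolding grad_term_S2[OF pu] grad_term_S2[OF pv] by (simp add: algebra_simps)
qed

lemma Bf_cs:
  "2 * a * b * Bf N h F G \<le> a^2 * Bf N h F F + b^2 * Bf N h G G"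
proof -
  have "2 * a * b * Bf N h F G = S2 N (\<lambda>i j. 2 * a * b * (Dx h F i j * Dx h G i j + Dy h F i j * Dy h G i j))"
    unfolding Bf_def by (simp only: S2_cmult)
  also have "\<dots> \<le> S2 N (\<lambda>i j. a^2 * (Dx h F i j * Dx h F i j + Dy h F i j * Dy h F i j) + b^2 * (Dx h G i j * Dx h G i j + Dy h G i j * Dy h G i j))"
  proof (rule S2_mono)
    fix i j
    have "0 \<le> (a * Dx h F i j - b * Dx h G i j)^2 + (a * Dy h F i j - b * Dy h G i j)^2" by simp
    then show "2 * a * b * (Dx h F i j * Dx h G i j + Dy h F i j * Dy h G i j) \<le> a^2 * (Dx h F i j * Dx h F i j + Dy h F i j * Dy h F i j) + b^2 * (Dx h G i j * Dx h G i j + Dy h G i j * Dy h G i j)"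
      by (simp add: power2_eq_square algebra_simps)
  qed
  also have "\<dots> = a^2 * Bf N h F F + b^2 * Bf N h G G"
    unfolding Bf_def by (simp only: S2_add S2_cmult)
  finally show ?thesis .
qed

lemma Bf_sym: "Bf N h F G = Bf N h G F"
  unfolding Bf_def by (simp add: mult.commute)


lemma final_ineq:
  fixes q e1s e2s e3s SHn SHo gA' gA gB' gB gU' gU dSa1 dSb2 dHa1 dHb2 C K1 K2 P1 P2 Q1 Q2
    T1 T2 T31 T32 G1 G2 mu1 mu2 Bp1A Bp2A BP1w BP2w BX1w BX2w cr1w cr2w :: real
  assumes q: "q \<ge> 0" and e: "e1s \<ge> 0" "e2s \<ge> 0" "e3s \<ge> 0"
    and i: "SHn - SHo \<le> dSa1 + dSb2 + dHa1 + dHb2 + (C * P1 - K1 * P1 + C * P2 - K2 * P2 + K1 * Q1 + K2 * Q2)"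
    and ii: "gA' - gA \<le> q * T1" "gB' - gB \<le> q * T2" "gU' - gU \<le> - (q * (T31 + T32))"
    and iii: "G1 = dSa1 + e1s * T1 - e3s * T31" "G2 = dSb2 + e2s * T2 - e3s * T32"
    and iv: "mu1 = G1 + dHa1 + Bp1A" "mu2 = G2 + dHb2 + Bp2A"
    and v: "mu1 = - (3 * BP1w - cr1w) / 2" "mu2 = - (3 * BP2w - cr2w) / 2"
    and vi: "2 * cr1w \<le> BX1w + BP1w" "2 * cr2w \<le> BX2w + BP2w"
    and vii: "C * P1 \<le> BP1w + Bp1A" "C * P2 \<le> BP2w + Bp2A"
  shows "q * SHn + e1s * gA' + e2s * gB' + e3s * gU' + q * (BP1w / 4) + q * (BP2w / 4) + K1 * (q * P1) + K2 * (q * P2)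
       \<le> q * SHo + e1s * gA + e2s * gB + e3s * gU + q * (BX1w / 4) + q * (BX2w / 4) + K1 * (q * Q1) + K2 * (q * Q2)"
proof -
  have W: "SHn - SHo + e1s * T1 + e2s * T2 - e3s * T31 - e3s * T32 + BP1w / 4 + BP2w / 4 + K1 * P1 + K2 * P2
        \<le> BX1w / 4 + BX2w / 4 + K1 * Q1 + K2 * Q2"
    using i iii iv v vi vii by argo
  have qW: "q * (SHn - SHo + e1s * T1 + e2s * T2 - e3s * T31 - e3s * T32 + BP1w / 4 + BP2w / 4 + K1 * P1 + K2 * P2)
        \<le> q * (BX1w / 4 + BX2w / 4 + K1 * Q1 + K2 * Q2)"
    by (rule mult_left_mono[OF W q])
  have a1: "e1s * (gA' - gA) \<le> e1s * (q * T1)" by (rule mult_left_mono[OF ii(1) e(1)])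
  have a2: "e2s * (gB' - gB) \<le> e2s * (q * T2)" by (rule mult_left_mono[OF ii(2) e(2)])
  have a3: "e3s * (gU' - gU) \<le> e3s * (- (q * (T31 + T32)))" by (rule mult_left_mono[OF ii(3) e(3)])
  show ?thesis using qW a1 a2 a3 by (simp add: algebra_simps)
qed

lemma per_Tk:
  assumes pu: "periodic N u"
  shows "periodic N (Tk h u)"
proof -
  have p1: "periodic N (\<lambda>i j. kappa' (Ax u i j) * (Dx h u i j)^2)"
    by (rule periodicI) (simp_all add: per_x[OF per_Ax[OF pu]] per_y[OF per_Ax[OF pu]] per_x[OF per_Dx[OF pu]] per_y[OF per_Dx[OF pu]])
  have p2: "periodic N (\<lambda>i j. kappa (Ax u i j) * Dx h u i j)"
    by (rule periodicI) (simp_all add: per_x[OF per_Ax[OF pu]] per_y[OF per_Ax[OF pu]] per_x[OF per_Dx[OF pu]] per_y[OF per_Dx[OF pu]])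
  have p3: "periodic N (\<lambda>i j. kappa' (Ay u i j) * (Dy h u i j)^2)"
    by (rule periodicI) (simp_all add: per_x[OF per_Ay[OF pu]] per_y[OF per_Ay[OF pu]] per_x[OF per_Dy[OF pu]] per_y[OF per_Dy[OF pu]])
  have p4: "periodic N (\<lambda>i j. kappa (Ay u i j) * Dy h u i j)"
    by (rule periodicI) (simp_all add: per_x[OF per_Ay[OF pu]] per_y[OF per_Ay[OF pu]] per_x[OF per_Dy[OF pu]] per_y[OF per_Dy[OF pu]])
  show ?thesis unfolding Tk_def
    by (rule periodicI) (simp_all add: per_x[OF per_ax[OF p1]] per_y[OF per_ax[OF p1]] per_x[OF per_dx[OF p2]] per_y[OF per_dx[OF p2]]
        per_x[OF per_ay[OF p3]] per_y[OF per_ay[OF p3]] per_x[OF per_dy[OF p4]] per_y[OF per_dy[OF p4]])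
qed

lemma per_u3: "periodic N a \<Longrightarrow> periodic N b \<Longrightarrow> periodic N (u3 a b)"
  unfolding u3_def by (rule periodicI) (simp_all add: per_x per_y)

lemma S2_PSol:
  assumes "PSol L N f P" "periodic N g"
  shows "S2 N (\<lambda>i j. f i j * g i j) = Bf N (L / real N) P g"
proof -
  have pP: "periodic N P" and l: "\<And>i j. - lap (L / real N) P i j = f i j" using assms(1) unfolding PSol_def by auto
  have "S2 N (\<lambda>i j. f i j * g i j) = S2 N (\<lambda>i j. - (lap (L / real N) P i j * g i j))"
    by (rule S2_cong) (simp add: l[symmetric])
  also have "\<dots> = Bf N (L / real N) P g" using sbp_lap[OF pP assms(2)] by (simp add: S2_neg)
  finally show ?thesis .
qed

theorem theorem4p1:
  fixes L dt M0 N0 e1 e2 e3 c12 c13 c23 Mob1 Mob2 A1 A2 :: real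
    and N n :: nat
    and \<phi>1 \<phi>2 :: "nat \<Rightarrow> grid"
  assumes "L > 0" and "N \<ge> 1" and "n \<ge> 1" and "dt > 0"
    and "M0 > 0" and "N0 > 0"
    and "e1 > 0" and "e2 > 0" and "e3 > 0"
    and "c12 > 0" and "c13 > 0" and "c23 > 0"
    and "4 * c13 * c23 - (c12 - c13 - c23)^2 > 0"
    and "Mob1 > 0" and "Mob2 > 0"
    and "A1 \<ge> Mob1 * (3 * c13 + 3 * c23 + 2 * c12)^2 / 4"
    and "A2 \<ge> Mob2 * (3 * c13 + 3 * c23 + 2 * c12)^2 / 4"
    and "\<forall>k \<in> {n-1, n, n+1}. gibbs N (\<phi>1 k) (\<phi>2 k)"
    and "gmean L N (\<phi>1 (n-1)) = gmean L N (\<phi>1 n)" and "gmean L N (\<phi>1 n) = gmean L N (\<phi>1 (n+1))"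
    and "gmean L N (\<phi>2 (n-1)) = gmean L N (\<phi>2 n)" and "gmean L N (\<phi>2 n) = gmean L N (\<phi>2 (n+1))"
    and "bdf2_step L N M0 N0 e1 e2 e3 c12 c13 c23 Mob1 Mob2 dt A1 A2
           (\<phi>1 (n-1)) (\<phi>1 n) (\<phi>1 (n+1)) (\<phi>2 (n-1)) (\<phi>2 n) (\<phi>2 (n+1))"
  shows "Eh L N M0 N0 e1 e2 e3 c12 c13 c23 Mob1 Mob2 dt (\<phi>1 n) (\<phi>1 (n+1)) (\<phi>2 n) (\<phi>2 (n+1))
         \<le> Eh L N M0 N0 e1 e2 e3 c12 c13 c23 Mob1 Mob2 dt (\<phi>1 (n-1)) (\<phi>1 n) (\<phi>2 (n-1)) (\<phi>2 n)"
proof -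
  let ?h = "L / real N"
  define q where "q = ?h^2"
  have N1: "N \<ge> 1" using assms(2) .
  have Lp: "L > 0" using assms(1) .
  have hnz: "?h \<noteq> 0" using Lp N1 by simp
  have qnn: "q \<ge> 0" unfolding q_def by simp
  define a0 where "a0 = \<phi>1 (n - 1)"
  define a where "a = \<phi>1 n"
  define an where "an = \<phi>1 (n + 1)"
  define b0 where "b0 = \<phi>2 (n - 1)"
  define b where "b = \<phi>2 n"
  define bn where "bn = \<phi>2 (n + 1)"
  have G0: "gibbs N a0 b0" "gibbs N a b" "gibbs N an bn"
    using assms(18) unfolding a0_def a_def an_def b0_def b_def bn_def by auto
  have pa0: "periodic N a0" and pb0: "periodic N b0" using G0(1) unfolding gibbs_def by auto
  have pa: "periodic N a" and pb: "periodic N b" using G0(2) unfolding gibbs_def by auto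
  have pan: "periodic N an" and pbn: "periodic N bn" using G0(3) unfolding gibbs_def by auto
  have pos0: "\<And>i j. 0 < a0 i j \<and> 0 < b0 i j \<and> a0 i j + b0 i j < 1" using G0(1) unfolding gibbs_def by auto
  have pos: "\<And>i j. 0 < a i j \<and> 0 < b i j \<and> a i j + b i j < 1" using G0(2) unfolding gibbs_def by auto
  have posn: "\<And>i j. 0 < an i j \<and> 0 < bn i j \<and> an i j + bn i j < 1" using G0(3) unfolding gibbs_def by auto
  define \<psi>1 where "\<psi>1 = (\<lambda>i j. an i j - a i j)"
  define \<psi>2 where "\<psi>2 = (\<lambda>i j. bn i j - b i j)"
  define \<chi>1 where "\<chi>1 = (\<lambda>i j. a i j - a0 i j)"
  define \<chi>2 where "\<chi>2 = (\<lambda>i j. b i j - b0 i j)"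
  have p\<psi>1: "periodic N \<psi>1" unfolding \<psi>1_def by (rule per_diff[OF pan pa])
  have p\<psi>2: "periodic N \<psi>2" unfolding \<psi>2_def by (rule per_diff[OF pbn pb])
  have p\<chi>1: "periodic N \<chi>1" unfolding \<chi>1_def by (rule per_diff[OF pa pa0])
  have p\<chi>2: "periodic N \<chi>2" unfolding \<chi>2_def by (rule per_diff[OF pb pb0])
  have Nsq: "real N ^ 2 \<noteq> 0" using N1 by simp
  have s\<psi>1: "S2 N \<psi>1 = 0"
    using assms(20) Nsq unfolding \<psi>1_def S2_diff gmean_S2[OF Lp N1] a_def an_def by simp
  have s\<chi>1: "S2 N \<chi>1 = 0"
    using assms(19) Nsq unfolding \<chi>1_def S2_diff gmean_S2[OF Lp N1] a_def a0_def by simp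
  have s\<psi>2: "S2 N \<psi>2 = 0"
    using assms(22) Nsq unfolding \<psi>2_def S2_diff gmean_S2[OF Lp N1] b_def bn_def by simp
  have s\<chi>2: "S2 N \<chi>2 = 0"
    using assms(21) Nsq unfolding \<chi>2_def S2_diff gmean_S2[OF Lp N1] b_def b0_def by simp
  define P1 where "P1 = invlap L N \<psi>1"
  define P2 where "P2 = invlap L N \<psi>2"
  define X1 where "X1 = invlap L N \<chi>1"
  define X2 where "X2 = invlap L N \<chi>2"
  have PS1: "PSol L N \<psi>1 P1" unfolding P1_def by (rule invlap_PSol[OF Lp N1 p\<psi>1 s\<psi>1])
  have PS2: "PSol L N \<psi>2 P2" unfolding P2_def by (rule invlap_PSol[OF Lp N1 p\<psi>2 s\<psi>2])
  have XS1: "PSol L N \<chi>1 X1" unfolding X1_def by (rule invlap_PSol[OF Lp N1 p\<chi>1 s\<chi>1])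
  have XS2: "PSol L N \<chi>2 X2" unfolding X2_def by (rule invlap_PSol[OF Lp N1 p\<chi>2 s\<chi>2])
  have pP1: "periodic N P1" and lP1: "\<And>i j. - lap ?h P1 i j = \<psi>1 i j" using PS1 unfolding PSol_def by auto
  have pP2: "periodic N P2" and lP2: "\<And>i j. - lap ?h P2 i j = \<psi>2 i j" using PS2 unfolding PSol_def by auto
  have pX1: "periodic N X1" and lX1: "\<And>i j. - lap ?h X1 i j = \<chi>1 i j" using XS1 unfolding PSol_def by auto
  have pX2: "periodic N X2" and lX2: "\<And>i j. - lap ?h X2 i j = \<chi>2 i j" using XS2 unfolding PSol_def by auto
  have B: "bdf2_step L N M0 N0 e1 e2 e3 c12 c13 c23 Mob1 Mob2 dt A1 A2 a0 a an b0 b bn"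
    using assms(23) unfolding a0_def a_def an_def b0_def b_def bn_def .
  define mu1 where "mu1 = (\<lambda>i j. dGc1 L N M0 N0 e1 e3 an bn i j + dHa c12 c13 c23 (2 * a i j - a0 i j) (2 * b i j - b0 i j)
                       - A1 * dt * lap ?h (\<lambda>i j. an i j - a i j) i j)"
  define mu2 where "mu2 = (\<lambda>i j. dGc2 L N M0 N0 e2 e3 an bn i j + dHb c12 c13 c23 (2 * a i j - a0 i j) (2 * b i j - b0 i j)
                       - A2 * dt * lap ?h (\<lambda>i j. bn i j - b i j) i j)"
  have sch1: "\<And>i j. (3 * an i j - 4 * a i j + a0 i j) / (2 * dt) = Mob1 * lap ?h mu1 i j"
    using B unfolding bdf2_step_def Let_def mu1_def by blast
  have sch2: "\<And>i j. (3 * bn i j - 4 * b i j + b0 i j) / (2 * dt) = Mob2 * lap ?h mu2 i j"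
    using B unfolding bdf2_step_def Let_def mu2_def by blast
  have pu3n: "periodic N (u3 an bn)" by (rule per_u3[OF pan pbn])
  have pu3: "periodic N (u3 a b)" by (rule per_u3[OF pa pb])
  have pdG1: "periodic N (dGc1 L N M0 N0 e1 e3 an bn)" unfolding dGc1_def
    by (rule periodicI) (simp_all add: per_x[OF pan] per_y[OF pan] per_x[OF pbn] per_y[OF pbn]
        per_x[OF per_Tk[OF pan]] per_y[OF per_Tk[OF pan]] per_x[OF per_Tk[OF pu3n]] per_y[OF per_Tk[OF pu3n]])
  have pdG2: "periodic N (dGc2 L N M0 N0 e2 e3 an bn)" unfolding dGc2_def
    by (rule periodicI) (simp_all add: per_x[OF pan] per_y[OF pan] per_x[OF pbn] per_y[OF pbn]
        per_x[OF per_Tk[OF pbn]] per_y[OF per_Tk[OF pbn]] per_x[OF per_Tk[OF pu3n]] per_y[OF per_Tk[OF pu3n]])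
  have mu1_eq: "mu1 = (\<lambda>i j. dGc1 L N M0 N0 e1 e3 an bn i j + dHa c12 c13 c23 (2 * a i j - a0 i j) (2 * b i j - b0 i j)
                       - A1 * dt * lap ?h \<psi>1 i j)" unfolding mu1_def \<psi>1_def ..
  have mu2_eq: "mu2 = (\<lambda>i j. dGc2 L N M0 N0 e2 e3 an bn i j + dHb c12 c13 c23 (2 * a i j - a0 i j) (2 * b i j - b0 i j)
                       - A2 * dt * lap ?h \<psi>2 i j)" unfolding mu2_def \<psi>2_def ..
  have pmu1: "periodic N mu1" unfolding mu1_eq
    by (rule periodicI) (simp_all add: per_x[OF pdG1] per_y[OF pdG1] per_x[OF pa] per_y[OF pa] per_x[OF pa0] per_y[OF pa0]
       per_x[OF pb] per_y[OF pb] per_x[OF pb0] per_y[OF pb0] per_x[OF per_lap[OF p\<psi>1]] per_y[OF per_lap[OF p\<psi>1]])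
  have pmu2: "periodic N mu2" unfolding mu2_eq
    by (rule periodicI) (simp_all add: per_x[OF pdG2] per_y[OF pdG2] per_x[OF pa] per_y[OF pa] per_x[OF pa0] per_y[OF pa0]
       per_x[OF pb] per_y[OF pb] per_x[OF pb0] per_y[OF pb0] per_x[OF per_lap[OF p\<psi>2]] per_y[OF per_lap[OF p\<psi>2]])
  define w1 where "w1 = 1 / (Mob1 * dt)"
  define w2 where "w2 = 1 / (Mob2 * dt)"
  have lmu1: "lap ?h mu1 i j * P1 i j = (3 * (\<psi>1 i j * P1 i j) - \<chi>1 i j * P1 i j) * w1 / 2" for i j
  proof -
    have e: "lap ?h mu1 i j = (3 * an i j - 4 * a i j + a0 i j) / (2 * dt) / Mob1"
      using sch1[of i j] assms(14) by (simp add: field_simps)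
    show ?thesis unfolding e w1_def \<psi>1_def \<chi>1_def using assms(4,14) by (simp add: field_simps)
  qed
  have lmu2: "lap ?h mu2 i j * P2 i j = (3 * (\<psi>2 i j * P2 i j) - \<chi>2 i j * P2 i j) * w2 / 2" for i j
  proof -
    have e: "lap ?h mu2 i j = (3 * bn i j - 4 * b i j + b0 i j) / (2 * dt) / Mob2"
      using sch2[of i j] assms(15) by (simp add: field_simps)
    show ?thesis unfolding e w2_def \<psi>2_def \<chi>2_def using assms(4,15) by (simp add: field_simps)
  qed
  have v10: "S2 N (\<lambda>i j. mu1 i j * \<psi>1 i j) = - ((3 * Bf N ?h P1 P1 - Bf N ?h X1 P1) * w1 / 2)"
  proof -
    have "S2 N (\<lambda>i j. mu1 i j * \<psi>1 i j) = S2 N (\<lambda>i j. \<psi>1 i j * mu1 i j)" by (simp add: mult.commute)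
    also have "\<dots> = Bf N ?h P1 mu1" by (rule S2_PSol[OF PS1 pmu1])
    also have "\<dots> = Bf N ?h mu1 P1" by (rule Bf_sym)
    also have "\<dots> = - S2 N (\<lambda>i j. lap ?h mu1 i j * P1 i j)" using sbp_lap[OF pmu1 pP1] by simp
    also have "S2 N (\<lambda>i j. lap ?h mu1 i j * P1 i j) = S2 N (\<lambda>i j. (3 * (\<psi>1 i j * P1 i j) - \<chi>1 i j * P1 i j) * w1 / 2)"
      by (rule S2_cong) (rule lmu1)
    also have "\<dots> = (3 * S2 N (\<lambda>i j. \<psi>1 i j * P1 i j) - S2 N (\<lambda>i j. \<chi>1 i j * P1 i j)) * w1 / 2"
      by (simp only: S2_divc S2_multc S2_diff S2_cmult)
    also have "S2 N (\<lambda>i j. \<psi>1 i j * P1 i j) = Bf N ?h P1 P1" by (rule S2_PSol[OF PS1 pP1])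
    also have "S2 N (\<lambda>i j. \<chi>1 i j * P1 i j) = Bf N ?h X1 P1" by (rule S2_PSol[OF XS1 pP1])
    finally show ?thesis .
  qed
  have "(3 * Bf N ?h P1 P1 - Bf N ?h X1 P1) * w1 = 3 * (Bf N ?h P1 P1 * w1) - Bf N ?h X1 P1 * w1"
    by (simp add: algebra_simps)
  then have v1: "S2 N (\<lambda>i j. mu1 i j * \<psi>1 i j) = - (3 * (Bf N ?h P1 P1 * w1) - Bf N ?h X1 P1 * w1) / 2"
    using v10 by argo
  have v20: "S2 N (\<lambda>i j. mu2 i j * \<psi>2 i j) = - ((3 * Bf N ?h P2 P2 - Bf N ?h X2 P2) * w2 / 2)"
  proof -
    have "S2 N (\<lambda>i j. mu2 i j * \<psi>2 i j) = S2 N (\<lambda>i j. \<psi>2 i j * mu2 i j)" by (simp add: mult.commute)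
    also have "\<dots> = Bf N ?h P2 mu2" by (rule S2_PSol[OF PS2 pmu2])
    also have "\<dots> = Bf N ?h mu2 P2" by (rule Bf_sym)
    also have "\<dots> = - S2 N (\<lambda>i j. lap ?h mu2 i j * P2 i j)" using sbp_lap[OF pmu2 pP2] by simp
    also have "S2 N (\<lambda>i j. lap ?h mu2 i j * P2 i j) = S2 N (\<lambda>i j. (3 * (\<psi>2 i j * P2 i j) - \<chi>2 i j * P2 i j) * w2 / 2)"
      by (rule S2_cong) (rule lmu2)
    also have "\<dots> = (3 * S2 N (\<lambda>i j. \<psi>2 i j * P2 i j) - S2 N (\<lambda>i j. \<chi>2 i j * P2 i j)) * w2 / 2"
      by (simp only: S2_divc S2_multc S2_diff S2_cmult)
    also have "S2 N (\<lambda>i j. \<psi>2 i j * P2 i j) = Bf N ?h P2 P2" by (rule S2_PSol[OF PS2 pP2])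
    also have "S2 N (\<lambda>i j. \<chi>2 i j * P2 i j) = Bf N ?h X2 P2" by (rule S2_PSol[OF XS2 pP2])
    finally show ?thesis .
  qed
  have "(3 * Bf N ?h P2 P2 - Bf N ?h X2 P2) * w2 = 3 * (Bf N ?h P2 P2 * w2) - Bf N ?h X2 P2 * w2"
    by (simp add: algebra_simps)
  then have v2: "S2 N (\<lambda>i j. mu2 i j * \<psi>2 i j) = - (3 * (Bf N ?h P2 P2 * w2) - Bf N ?h X2 P2 * w2) / 2"
    using v20 by argo
  have iv1: "S2 N (\<lambda>i j. mu1 i j * \<psi>1 i j) = S2 N (\<lambda>i j. dGc1 L N M0 N0 e1 e3 an bn i j * \<psi>1 i j)
      + S2 N (\<lambda>i j. dHa c12 c13 c23 (2 * a i j - a0 i j) (2 * b i j - b0 i j) * \<psi>1 i j) + A1 * dt * Bf N ?h \<psi>1 \<psi>1"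
  proof -
    have "S2 N (\<lambda>i j. mu1 i j * \<psi>1 i j) = S2 N (\<lambda>i j. dGc1 L N M0 N0 e1 e3 an bn i j * \<psi>1 i j
      + dHa c12 c13 c23 (2 * a i j - a0 i j) (2 * b i j - b0 i j) * \<psi>1 i j + (- (A1 * dt)) * (lap ?h \<psi>1 i j * \<psi>1 i j))"
      unfolding mu1_eq by (rule S2_cong) (simp add: algebra_simps)
    also have "\<dots> = S2 N (\<lambda>i j. dGc1 L N M0 N0 e1 e3 an bn i j * \<psi>1 i j)
      + S2 N (\<lambda>i j. dHa c12 c13 c23 (2 * a i j - a0 i j) (2 * b i j - b0 i j) * \<psi>1 i j) + (- (A1 * dt)) * S2 N (\<lambda>i j. lap ?h \<psi>1 i j * \<psi>1 i j)"
      by (simp only: S2_add S2_cmult)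
    finally show ?thesis using sbp_lap[OF p\<psi>1 p\<psi>1, of ?h] by simp
  qed
  have iv2: "S2 N (\<lambda>i j. mu2 i j * \<psi>2 i j) = S2 N (\<lambda>i j. dGc2 L N M0 N0 e2 e3 an bn i j * \<psi>2 i j)
      + S2 N (\<lambda>i j. dHb c12 c13 c23 (2 * a i j - a0 i j) (2 * b i j - b0 i j) * \<psi>2 i j) + A2 * dt * Bf N ?h \<psi>2 \<psi>2"
  proof -
    have "S2 N (\<lambda>i j. mu2 i j * \<psi>2 i j) = S2 N (\<lambda>i j. dGc2 L N M0 N0 e2 e3 an bn i j * \<psi>2 i j
      + dHb c12 c13 c23 (2 * a i j - a0 i j) (2 * b i j - b0 i j) * \<psi>2 i j + (- (A2 * dt)) * (lap ?h \<psi>2 i j * \<psi>2 i j))"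
      unfolding mu2_eq by (rule S2_cong) (simp add: algebra_simps)
    also have "\<dots> = S2 N (\<lambda>i j. dGc2 L N M0 N0 e2 e3 an bn i j * \<psi>2 i j)
      + S2 N (\<lambda>i j. dHb c12 c13 c23 (2 * a i j - a0 i j) (2 * b i j - b0 i j) * \<psi>2 i j) + (- (A2 * dt)) * S2 N (\<lambda>i j. lap ?h \<psi>2 i j * \<psi>2 i j)"
      by (simp only: S2_add S2_cmult)
    finally show ?thesis using sbp_lap[OF p\<psi>2 p\<psi>2, of ?h] by simp
  qed
  have iii1: "S2 N (\<lambda>i j. dGc1 L N M0 N0 e1 e3 an bn i j * \<psi>1 i j) = S2 N (\<lambda>i j. dSa M0 N0 (an i j) (bn i j) * \<psi>1 i j)
      + e1^2 * S2 N (\<lambda>i j. Tk ?h an i j * \<psi>1 i j) - e3^2 * S2 N (\<lambda>i j. Tk ?h (u3 an bn) i j * \<psi>1 i j)"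
  proof -
    have "S2 N (\<lambda>i j. dGc1 L N M0 N0 e1 e3 an bn i j * \<psi>1 i j) = S2 N (\<lambda>i j. dSa M0 N0 (an i j) (bn i j) * \<psi>1 i j
      + e1^2 * (Tk ?h an i j * \<psi>1 i j) - e3^2 * (Tk ?h (u3 an bn) i j * \<psi>1 i j))"
      unfolding dGc1_def by (rule S2_cong) (simp add: algebra_simps)
    then show ?thesis by (simp only: S2_add S2_diff S2_cmult)
  qed
  have iii2: "S2 N (\<lambda>i j. dGc2 L N M0 N0 e2 e3 an bn i j * \<psi>2 i j) = S2 N (\<lambda>i j. dSb M0 N0 (an i j) (bn i j) * \<psi>2 i j)
      + e2^2 * S2 N (\<lambda>i j. Tk ?h bn i j * \<psi>2 i j) - e3^2 * S2 N (\<lambda>i j. Tk ?h (u3 an bn) i j * \<psi>2 i j)"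
  proof -
    have "S2 N (\<lambda>i j. dGc2 L N M0 N0 e2 e3 an bn i j * \<psi>2 i j) = S2 N (\<lambda>i j. dSb M0 N0 (an i j) (bn i j) * \<psi>2 i j
      + e2^2 * (Tk ?h bn i j * \<psi>2 i j) - e3^2 * (Tk ?h (u3 an bn) i j * \<psi>2 i j))"
      unfolding dGc2_def by (rule S2_cong) (simp add: algebra_simps)
    then show ?thesis by (simp only: S2_add S2_diff S2_cmult)
  qed
  have posu3n: "\<And>i j. 0 < u3 an bn i j" using posn unfolding u3_def by (simp add: algebra_simps)
  have posu3: "\<And>i j. 0 < u3 a b i j" using pos unfolding u3_def by (simp add: algebra_simps)
  have posan: "\<And>i j. 0 < an i j" and posbn: "\<And>i j. 0 < bn i j" using posn by auto
  have posa: "\<And>i j. 0 < a i j" and posb: "\<And>i j. 0 < b i j" using pos by auto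
  have ii1: "grad_term L N an - grad_term L N a \<le> q * S2 N (\<lambda>i j. Tk ?h an i j * \<psi>1 i j)"
  proof -
    have g: "grad_term L N an + ?h^2 * S2 N (\<lambda>i j. Tk ?h an i j * (a i j - an i j)) \<le> grad_term L N a"
      by (rule grad_tan[OF pan pa posan posa])
    have "S2 N (\<lambda>i j. Tk ?h an i j * (a i j - an i j)) = - S2 N (\<lambda>i j. Tk ?h an i j * \<psi>1 i j)"
      unfolding S2_neg[symmetric] \<psi>1_def by (rule S2_cong) (simp add: algebra_simps)
    then show ?thesis using g unfolding q_def by simp
  qed
  have ii2: "grad_term L N bn - grad_term L N b \<le> q * S2 N (\<lambda>i j. Tk ?h bn i j * \<psi>2 i j)"
  proof -
    have g: "grad_term L N bn + ?h^2 * S2 N (\<lambda>i j. Tk ?h bn i j * (b i j - bn i j)) \<le> grad_term L N b"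
      by (rule grad_tan[OF pbn pb posbn posb])
    have "S2 N (\<lambda>i j. Tk ?h bn i j * (b i j - bn i j)) = - S2 N (\<lambda>i j. Tk ?h bn i j * \<psi>2 i j)"
      unfolding S2_neg[symmetric] \<psi>2_def by (rule S2_cong) (simp add: algebra_simps)
    then show ?thesis using g unfolding q_def by simp
  qed
  have ii3: "grad_term L N (u3 an bn) - grad_term L N (u3 a b) \<le> - (q * (S2 N (\<lambda>i j. Tk ?h (u3 an bn) i j * \<psi>1 i j) + S2 N (\<lambda>i j. Tk ?h (u3 an bn) i j * \<psi>2 i j)))"
  proof -
    have g: "grad_term L N (u3 an bn) + ?h^2 * S2 N (\<lambda>i j. Tk ?h (u3 an bn) i j * (u3 a b i j - u3 an bn i j)) \<le> grad_term L N (u3 a b)"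
      by (rule grad_tan[OF pu3n pu3 posu3n posu3])
    have "S2 N (\<lambda>i j. Tk ?h (u3 an bn) i j * (u3 a b i j - u3 an bn i j)) = S2 N (\<lambda>i j. Tk ?h (u3 an bn) i j * \<psi>1 i j) + S2 N (\<lambda>i j. Tk ?h (u3 an bn) i j * \<psi>2 i j)"
      unfolding S2_add[symmetric] \<psi>1_def \<psi>2_def u3_def by (rule S2_cong) (simp add: algebra_simps)
    then have "grad_term L N (u3 an bn) + ?h^2 * (S2 N (\<lambda>i j. Tk ?h (u3 an bn) i j * \<psi>1 i j) + S2 N (\<lambda>i j. Tk ?h (u3 an bn) i j * \<psi>2 i j)) \<le> grad_term L N (u3 a b)"
      using g by (simp only:)
    then show ?thesis unfolding q_def by linarith
  qed
  have vi1: "2 * (Bf N ?h X1 P1 * w1) \<le> Bf N ?h X1 X1 * w1 + Bf N ?h P1 P1 * w1"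
  proof -
    have w: "w1 \<ge> 0" unfolding w1_def using assms(4,14) by simp
    have "2 * 1 * 1 * Bf N ?h X1 P1 \<le> 1^2 * Bf N ?h X1 X1 + 1^2 * Bf N ?h P1 P1" by (rule Bf_cs)
    then have "2 * Bf N ?h X1 P1 * w1 \<le> (Bf N ?h X1 X1 + Bf N ?h P1 P1) * w1" using w by (intro mult_right_mono) auto
    then show ?thesis by (simp add: algebra_simps)
  qed
  have vi2: "2 * (Bf N ?h X2 P2 * w2) \<le> Bf N ?h X2 X2 * w2 + Bf N ?h P2 P2 * w2"
  proof -
    have w: "w2 \<ge> 0" unfolding w2_def using assms(4,15) by simp
    have "2 * 1 * 1 * Bf N ?h X2 P2 \<le> 1^2 * Bf N ?h X2 X2 + 1^2 * Bf N ?h P2 P2" by (rule Bf_cs)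
    then have "2 * Bf N ?h X2 P2 * w2 \<le> (Bf N ?h X2 X2 + Bf N ?h P2 P2) * w2" using w by (intro mult_right_mono) auto
    then show ?thesis by (simp add: algebra_simps)
  qed
  define C where "C = 3 * c13 + 3 * c23 + 2 * c12"
  define K1 where "K1 = (2 * c12 + 3 * c13 + c23) / 2"
  define K2 where "K2 = (2 * c12 + c13 + 3 * c23) / 2"
  have Cpos: "C > 0" unfolding C_def using assms(10,11,12) by simp
  have vii1: "C * S2 N (\<lambda>i j. \<psi>1 i j * \<psi>1 i j) \<le> Bf N ?h P1 P1 * w1 + A1 * dt * Bf N ?h \<psi>1 \<psi>1"
  proof -
    have w: "w1 > 0" unfolding w1_def using assms(4,14) by simp
    have "0 \<le> Mob1 * (3 * c13 + 3 * c23 + 2 * c12)^2 / 4" using assms(14) by simp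
    then have A1nn: "A1 \<ge> 0" using assms(16) by linarith
    have Ad: "A1 * dt \<ge> 0" using A1nn assms(4) by simp
    have e: "S2 N (\<lambda>i j. \<psi>1 i j * \<psi>1 i j) = Bf N ?h P1 \<psi>1" by (rule S2_PSol[OF PS1 p\<psi>1])
    have nn: "S2 N (\<lambda>i j. \<psi>1 i j * \<psi>1 i j) \<ge> 0" by (rule S2_nonneg) simp
    have cs: "2 * sqrt w1 * sqrt (A1 * dt) * Bf N ?h P1 \<psi>1 \<le> (sqrt w1)^2 * Bf N ?h P1 P1 + (sqrt (A1 * dt))^2 * Bf N ?h \<psi>1 \<psi>1"
      by (rule Bf_cs)
    have "w1 * (A1 * dt) = A1 / Mob1" unfolding w1_def using assms(4) by simp
    then have sq: "sqrt w1 * sqrt (A1 * dt) = sqrt (A1 / Mob1)" by (simp add: real_sqrt_mult[symmetric])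
    have "Mob1 * C^2 / 4 \<le> A1" using assms(16) unfolding C_def by simp
    then have "C^2 / 4 \<le> A1 / Mob1" using assms(14) by (simp add: pos_le_divide_eq mult.commute)
    then have "sqrt (C^2 / 4) \<le> sqrt (A1 / Mob1)" by (rule real_sqrt_le_mono)
    moreover have "sqrt (C^2 / 4) = C / 2" using Cpos by (simp add: real_sqrt_divide)
    ultimately have "C \<le> 2 * sqrt w1 * sqrt (A1 * dt)" using sq by simp
    then have "C * S2 N (\<lambda>i j. \<psi>1 i j * \<psi>1 i j) \<le> 2 * sqrt w1 * sqrt (A1 * dt) * S2 N (\<lambda>i j. \<psi>1 i j * \<psi>1 i j)"
      using nn by (rule mult_right_mono)
    also have "\<dots> \<le> Bf N ?h P1 P1 * w1 + A1 * dt * Bf N ?h \<psi>1 \<psi>1"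
      using cs w Ad unfolding e by (simp add: mult.commute)
    finally show ?thesis .
  qed
  have vii2: "C * S2 N (\<lambda>i j. \<psi>2 i j * \<psi>2 i j) \<le> Bf N ?h P2 P2 * w2 + A2 * dt * Bf N ?h \<psi>2 \<psi>2"
  proof -
    have w: "w2 > 0" unfolding w2_def using assms(4,15) by simp
    have "0 \<le> Mob2 * (3 * c13 + 3 * c23 + 2 * c12)^2 / 4" using assms(15) by simp
    then have A2nn: "A2 \<ge> 0" using assms(17) by linarith
    have Ad: "A2 * dt \<ge> 0" using A2nn assms(4) by simp
    have e: "S2 N (\<lambda>i j. \<psi>2 i j * \<psi>2 i j) = Bf N ?h P2 \<psi>2" by (rule S2_PSol[OF PS2 p\<psi>2])
    have nn: "S2 N (\<lambda>i j. \<psi>2 i j * \<psi>2 i j) \<ge> 0" by (rule S2_nonneg) simp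
    have cs: "2 * sqrt w2 * sqrt (A2 * dt) * Bf N ?h P2 \<psi>2 \<le> (sqrt w2)^2 * Bf N ?h P2 P2 + (sqrt (A2 * dt))^2 * Bf N ?h \<psi>2 \<psi>2"
      by (rule Bf_cs)
    have "w2 * (A2 * dt) = A2 / Mob2" unfolding w2_def using assms(4) by simp
    then have sq: "sqrt w2 * sqrt (A2 * dt) = sqrt (A2 / Mob2)" by (simp add: real_sqrt_mult[symmetric])
    have "Mob2 * C^2 / 4 \<le> A2" using assms(17) unfolding C_def by simp
    then have "C^2 / 4 \<le> A2 / Mob2" using assms(15) by (simp add: pos_le_divide_eq mult.commute)
    then have "sqrt (C^2 / 4) \<le> sqrt (A2 / Mob2)" by (rule real_sqrt_le_mono)
    moreover have "sqrt (C^2 / 4) = C / 2" using Cpos by (simp add: real_sqrt_divide)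
    ultimately have "C \<le> 2 * sqrt w2 * sqrt (A2 * dt)" using sq by simp
    then have "C * S2 N (\<lambda>i j. \<psi>2 i j * \<psi>2 i j) \<le> 2 * sqrt w2 * sqrt (A2 * dt) * S2 N (\<lambda>i j. \<psi>2 i j * \<psi>2 i j)"
      using nn by (rule mult_right_mono)
    also have "\<dots> \<le> Bf N ?h P2 P2 * w2 + A2 * dt * Bf N ?h \<psi>2 \<psi>2"
      using cs w Ad unfolding e by (simp add: mult.commute)
    finally show ?thesis .
  qed
  have i_pt: "(Sfun M0 N0 (an i j) (bn i j) + Hfun c12 c13 c23 (an i j) (bn i j)) - (Sfun M0 N0 (a i j) (b i j) + Hfun c12 c13 c23 (a i j) (b i j))
     \<le> dSa M0 N0 (an i j) (bn i j) * \<psi>1 i j + dSb M0 N0 (an i j) (bn i j) * \<psi>2 i j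
       + dHa c12 c13 c23 (2 * a i j - a0 i j) (2 * b i j - b0 i j) * \<psi>1 i j
       + dHb c12 c13 c23 (2 * a i j - a0 i j) (2 * b i j - b0 i j) * \<psi>2 i j
       + (C * (\<psi>1 i j * \<psi>1 i j) - K1 * (\<psi>1 i j * \<psi>1 i j) + C * (\<psi>2 i j * \<psi>2 i j) - K2 * (\<psi>2 i j * \<psi>2 i j)
          + K1 * (\<chi>1 i j * \<chi>1 i j) + K2 * (\<chi>2 i j * \<chi>2 i j))" for i j
  proof -
    have s: "Sfun M0 N0 (an i j) (bn i j) - Sfun M0 N0 (a i j) (b i j) \<le> dSa M0 N0 (an i j) (bn i j) * (an i j - a i j) + dSb M0 N0 (an i j) (bn i j) * (bn i j - b i j)"
      by (rule S_tan[OF assms(5,6)]) (use pos posn in auto)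
    have hh: "Hfun c12 c13 c23 (an i j) (bn i j) - Hfun c12 c13 c23 (a i j) (b i j)
          - dHa c12 c13 c23 (2 * a i j - a0 i j) (2 * b i j - b0 i j) * (an i j - a i j) - dHb c12 c13 c23 (2 * a i j - a0 i j) (2 * b i j - b0 i j) * (bn i j - b i j)
       \<le> (C - K1) * (an i j - a i j)^2 + (C - K2) * (bn i j - b i j)^2 + K1 * (a i j - a0 i j)^2 + K2 * (b i j - b0 i j)^2"
      unfolding C_def K1_def K2_def by (rule H_pt[OF assms(10,11,12)])
    have r: "(C - K1) * (an i j - a i j)^2 + (C - K2) * (bn i j - b i j)^2 + K1 * (a i j - a0 i j)^2 + K2 * (b i j - b0 i j)^2
       = C * (\<psi>1 i j * \<psi>1 i j) - K1 * (\<psi>1 i j * \<psi>1 i j) + C * (\<psi>2 i j * \<psi>2 i j) - K2 * (\<psi>2 i j * \<psi>2 i j)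
          + K1 * (\<chi>1 i j * \<chi>1 i j) + K2 * (\<chi>2 i j * \<chi>2 i j)"
      unfolding \<psi>1_def \<psi>2_def \<chi>1_def \<chi>2_def by (simp add: power2_eq_square algebra_simps)
    have p1: "\<psi>1 i j = an i j - a i j" and p2: "\<psi>2 i j = bn i j - b i j" unfolding \<psi>1_def \<psi>2_def by simp_all
    show ?thesis using s hh r unfolding p1 p2 by argo
  qed
  have i1: "S2 N (\<lambda>i j. Sfun M0 N0 (an i j) (bn i j) + Hfun c12 c13 c23 (an i j) (bn i j)) - S2 N (\<lambda>i j. Sfun M0 N0 (a i j) (b i j) + Hfun c12 c13 c23 (a i j) (b i j))
     \<le> S2 N (\<lambda>i j. dSa M0 N0 (an i j) (bn i j) * \<psi>1 i j) + S2 N (\<lambda>i j. dSb M0 N0 (an i j) (bn i j) * \<psi>2 i j)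
       + S2 N (\<lambda>i j. dHa c12 c13 c23 (2 * a i j - a0 i j) (2 * b i j - b0 i j) * \<psi>1 i j)
       + S2 N (\<lambda>i j. dHb c12 c13 c23 (2 * a i j - a0 i j) (2 * b i j - b0 i j) * \<psi>2 i j)
       + (C * S2 N (\<lambda>i j. \<psi>1 i j * \<psi>1 i j) - K1 * S2 N (\<lambda>i j. \<psi>1 i j * \<psi>1 i j) + C * S2 N (\<lambda>i j. \<psi>2 i j * \<psi>2 i j) - K2 * S2 N (\<lambda>i j. \<psi>2 i j * \<psi>2 i j)
          + K1 * S2 N (\<lambda>i j. \<chi>1 i j * \<chi>1 i j) + K2 * S2 N (\<lambda>i j. \<chi>2 i j * \<chi>2 i j))"
  proof -
    have "S2 N (\<lambda>i j. (Sfun M0 N0 (an i j) (bn i j) + Hfun c12 c13 c23 (an i j) (bn i j)) - (Sfun M0 N0 (a i j) (b i j) + Hfun c12 c13 c23 (a i j) (b i j)))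
     \<le> S2 N (\<lambda>i j. dSa M0 N0 (an i j) (bn i j) * \<psi>1 i j + dSb M0 N0 (an i j) (bn i j) * \<psi>2 i j
       + dHa c12 c13 c23 (2 * a i j - a0 i j) (2 * b i j - b0 i j) * \<psi>1 i j
       + dHb c12 c13 c23 (2 * a i j - a0 i j) (2 * b i j - b0 i j) * \<psi>2 i j
       + (C * (\<psi>1 i j * \<psi>1 i j) - K1 * (\<psi>1 i j * \<psi>1 i j) + C * (\<psi>2 i j * \<psi>2 i j) - K2 * (\<psi>2 i j * \<psi>2 i j)
          + K1 * (\<chi>1 i j * \<chi>1 i j) + K2 * (\<chi>2 i j * \<chi>2 i j)))"
      by (rule S2_mono) (rule i_pt)
    then show ?thesis by (simp only: S2_add S2_diff S2_cmult)
  qed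
  have Gn: "Gh L N M0 N0 e1 e2 e3 c12 c13 c23 an bn = q * S2 N (\<lambda>i j. Sfun M0 N0 (an i j) (bn i j) + Hfun c12 c13 c23 (an i j) (bn i j))
      + e1^2 * grad_term L N an + e2^2 * grad_term L N bn + e3^2 * grad_term L N (u3 an bn)"
    unfolding Gh_def gip_S2 q_def by simp
  have Go: "Gh L N M0 N0 e1 e2 e3 c12 c13 c23 a b = q * S2 N (\<lambda>i j. Sfun M0 N0 (a i j) (b i j) + Hfun c12 c13 c23 (a i j) (b i j))
      + e1^2 * grad_term L N a + e2^2 * grad_term L N b + e3^2 * grad_term L N (u3 a b)"
    unfolding Gh_def gip_S2 q_def by simp
  have f\<psi>1: "(\<lambda>i j. an i j - a i j) = \<psi>1" and f\<psi>2: "(\<lambda>i j. bn i j - b i j) = \<psi>2"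
    and f\<chi>1: "(\<lambda>i j. a i j - a0 i j) = \<chi>1" and f\<chi>2: "(\<lambda>i j. b i j - b0 i j) = \<chi>2"
    unfolding \<psi>1_def \<psi>2_def \<chi>1_def \<chi>2_def by simp_all
  have hn1_e: "(\<lambda>i j. (an i j - a i j) / dt) = (\<lambda>i j. \<psi>1 i j / dt)" by (simp add: \<psi>1_def)
  have hn1: "(hm1_norm L N (\<lambda>i j. (an i j - a i j) / dt))^2 = q * Bf N ?h P1 P1 / dt^2"
    unfolding hn1_e using hm1_norm_sq[OF Lp N1 p\<psi>1 s\<psi>1, of dt] unfolding P1_def[symmetric] q_def .
  have hn2_e: "(\<lambda>i j. (bn i j - b i j) / dt) = (\<lambda>i j. \<psi>2 i j / dt)" by (simp add: \<psi>2_def)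
  have hn2: "(hm1_norm L N (\<lambda>i j. (bn i j - b i j) / dt))^2 = q * Bf N ?h P2 P2 / dt^2"
    unfolding hn2_e using hm1_norm_sq[OF Lp N1 p\<psi>2 s\<psi>2, of dt] unfolding P2_def[symmetric] q_def .
  have ho1_e: "(\<lambda>i j. (a i j - a0 i j) / dt) = (\<lambda>i j. \<chi>1 i j / dt)" by (simp add: \<chi>1_def)
  have ho1: "(hm1_norm L N (\<lambda>i j. (a i j - a0 i j) / dt))^2 = q * Bf N ?h X1 X1 / dt^2"
    unfolding ho1_e using hm1_norm_sq[OF Lp N1 p\<chi>1 s\<chi>1, of dt] unfolding X1_def[symmetric] q_def .
  have ho2_e: "(\<lambda>i j. (b i j - b0 i j) / dt) = (\<lambda>i j. \<chi>2 i j / dt)" by (simp add: \<chi>2_def)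
  have ho2: "(hm1_norm L N (\<lambda>i j. (b i j - b0 i j) / dt))^2 = q * Bf N ?h X2 X2 / dt^2"
    unfolding ho2_e using hm1_norm_sq[OF Lp N1 p\<chi>2 s\<chi>2, of dt] unfolding X2_def[symmetric] q_def .
  have gn1: "(gnorm2 L N (\<lambda>i j. an i j - a i j))^2 = q * S2 N (\<lambda>i j. \<psi>1 i j * \<psi>1 i j)"
    unfolding f\<psi>1 gnorm2_sq q_def ..
  have gn2: "(gnorm2 L N (\<lambda>i j. bn i j - b i j))^2 = q * S2 N (\<lambda>i j. \<psi>2 i j * \<psi>2 i j)"
    unfolding f\<psi>2 gnorm2_sq q_def ..
  have go1: "(gnorm2 L N (\<lambda>i j. a i j - a0 i j))^2 = q * S2 N (\<lambda>i j. \<chi>1 i j * \<chi>1 i j)"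
    unfolding f\<chi>1 gnorm2_sq q_def ..
  have go2: "(gnorm2 L N (\<lambda>i j. b i j - b0 i j))^2 = q * S2 N (\<lambda>i j. \<chi>2 i j * \<chi>2 i j)"
    unfolding f\<chi>2 gnorm2_sq q_def ..
  have tw: "dt / (4 * M) * (q * B / dt^2) = q * (B * (1 / (M * dt)) / 4)" for M B
    using assms(4) by (simp add: field_simps power2_eq_square)
  have Enew: "Eh L N M0 N0 e1 e2 e3 c12 c13 c23 Mob1 Mob2 dt a an b bn
     = q * S2 N (\<lambda>i j. Sfun M0 N0 (an i j) (bn i j) + Hfun c12 c13 c23 (an i j) (bn i j))
      + e1^2 * grad_term L N an + e2^2 * grad_term L N bn + e3^2 * grad_term L N (u3 an bn)
      + q * (Bf N ?h P1 P1 * w1 / 4) + q * (Bf N ?h P2 P2 * w2 / 4)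
      + K1 * (q * S2 N (\<lambda>i j. \<psi>1 i j * \<psi>1 i j)) + K2 * (q * S2 N (\<lambda>i j. \<psi>2 i j * \<psi>2 i j))"
    unfolding Eh_def Gn hn1 hn2 gn1 gn2 tw K1_def K2_def w1_def w2_def ..
  have Eold: "Eh L N M0 N0 e1 e2 e3 c12 c13 c23 Mob1 Mob2 dt a0 a b0 b
     = q * S2 N (\<lambda>i j. Sfun M0 N0 (a i j) (b i j) + Hfun c12 c13 c23 (a i j) (b i j))
      + e1^2 * grad_term L N a + e2^2 * grad_term L N b + e3^2 * grad_term L N (u3 a b)
      + q * (Bf N ?h X1 X1 * w1 / 4) + q * (Bf N ?h X2 X2 * w2 / 4)
      + K1 * (q * S2 N (\<lambda>i j. \<chi>1 i j * \<chi>1 i j)) + K2 * (q * S2 N (\<lambda>i j. \<chi>2 i j * \<chi>2 i j))"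
    unfolding Eh_def Go ho1 ho2 go1 go2 tw K1_def K2_def w1_def w2_def ..
  have e1s: "e1^2 \<ge> 0" and e2s: "e2^2 \<ge> 0" and e3s: "e3^2 \<ge> 0" by simp_all
  note FI = final_ineq[OF qnn e1s e2s e3s i1 ii1 ii2 ii3 iii1 iii2 iv1 iv2 v1 v2 vi1 vi2 vii1 vii2]
  have "Eh L N M0 N0 e1 e2 e3 c12 c13 c23 Mob1 Mob2 dt a an b bn \<le> Eh L N M0 N0 e1 e2 e3 c12 c13 c23 Mob1 Mob2 dt a0 a b0 b"
    unfolding Enew Eold using FI by simp
  then show ?thesis unfolding a0_def a_def an_def b0_def b_def bn_def .
qed


end
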